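(* Consider LinIMED-1 under Assumption 1 with $\sqrt\lambda S\ge1$. Then for every free parameter $0<\Gamma<1$, $$F_2\le 2T\Gamma+O\Big(\frac{d\beta_T\log T}{\Gamma}\Big)\log\Big(1+\frac{L^2\beta_T\log T}{\lambda\Gamma^2}\Big),$$ and with the choice $\Gamma=d\log^{3/2}(T)/\sqrt T$, $F_2\le O(d\sqrt T\log^{3/2}T)$.
   Context: Stochastic linear bandit model: at each round $t=1,\dots,T$ the learner observes an arm set $\mathcal{A}_t$, each arm $a$ with context $x_{t,a}\in\mathbb{R}^d$; it chooses $A_t$, $X_t:=x_{t,A_t}$, and observes $Y_t=\langle\theta^*,X_t\rangle+\eta_t$ with $\eta_t$ conditionally $R$-sub-Gaussian given $A_1,\dots,A_t,Y_1,\dots,Y_{t-1}$. Assumption 1: $\|x_{t,a}\|\le L$, $\|\theta^*\|\le S$, and all gaps $\max_a\langle\theta^*,x_{t,a}\rangle-\langle\theta^*,x_{t,b}\rangle\le1$. LinIMED-1 with parameter $\lambda>0$: $V_0=\lambda I_d$, $W_0=0$, $\hat\theta_t=V_t^{-1}W_t$, $V_t=V_{t-1}+X_tX_t^\top$, $W_t=W_{t-1}+Y_tX_t$; at round $t$, with $\gamma=1/t^2$, $\beta_{t-1}=\big(R\sqrt{d\log\frac{1+(t-1)L^2/\lambda}{\gamma}}+\sqrt\lambda S\big)^2$ (and $\beta_T$ the analogous quantity at $T$); $\hat\mu_{t,a}=\langle\hat\theta_{t-1},x_{t,a}\rangle$, $\hat\Delta_{t,a}=\max_j\hat\mu_{t,j}-\hat\mu_{t,a}$,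 $g_{t,a}=\beta_{t-1}\|x_{t,a}\|^2_{V_{t-1}^{-1}}$ where $\|x\|_A=\sqrt{x^\top Ax}$; the index is $I_{t,a}=-\log g_{t,a}$ for $a=\arg\max_j\hat\mu_{t,j}$ and $I_{t,a}=\hat\Delta^2_{t,a}/g_{t,a}-\log g_{t,a}$ otherwise; $A_t=\arg\min_aI_{t,a}$. Regret decomposition: let $x_t^*=x_{t,a_t^*}$ with $a_t^*=\arg\max_a\langle\theta^*,x_{t,a}\rangle$, $\Delta_t=\langle\theta^*,x^*_t\rangle-\langle\theta^*,X_t\rangle$, $\delta=\Delta_t/\sqrt{\log T}$, $\epsilon=(1-2/\sqrt{\log T})\Delta_t$. Events: $B_t=\{\|\hat\theta_{t-1}-\theta^*\|_{V_{t-1}}\le\sqrt{\beta_{t-1}}\}$, $C_t=\{\max_b\langle\hat\theta_{t-1},x_{t,b}\rangle>\langle\theta^*,x^*_t\rangle-\delta\}$, $D_t=\{\hat\Delta_{t,A_t}\ge\epsilon\}$. Define $F_1=\mathbb{E}\sum_t\Delta_t\mathbb{1}\{B_t,C_t,D_t\}$, $F_2=\mathbb{E}\sum_t\Delta_t\mathbb{1}\{B_t,C_t,\overline D_t\}$, $F_3=\mathbb{E}\sum_t\Delta_t\mathbb{1}\{B_t,\overline C_t\}$, $F_4=\mathbb{E}\sum_t\Delta_t\mathbb{1}\{\overline B_t\}$, so that $R_T=F_1+F_2+F_3+F_4$. $O(\cdot)$ hides constants not depending on $T,d,\Gamma$. *)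

theory Defs
  imports "Jordan_Normal_Form.Gauss_Jordan_Elimination" "HOL-Probability.Probability" "HOL-Probability.Conditional_Expectation"
begin

definition vnorm :: "real Matrix.vec \<Rightarrow> real" where
  "vnorm v = sqrt (v \<bullet> v)"

definition wnorm :: "real mat \<Rightarrow> real Matrix.vec \<Rightarrow> real" where
  "wnorm A v = sqrt (v \<bullet> (A *\<^sub>v v))"

text \<open>Matrix inverse (Gauss-Jordan; the matrices inverted below are positive definite).\<close>
definition minv :: "real mat \<Rightarrow> real mat" where
  "minv A = the (mat_inverse A)"

definition outer :: "real Matrix.vec \<Rightarrow> real mat" where
  "outer v = Matrix.mat (dim_vec v) (dim_vec v) (\<lambda>(i, j). v $ i * v $ j)"

text \<open>At round t there are narms t arms, indexed 0..<narms t, arm a has context ctx t a.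
  theta is the unknown parameter theta^*.\<close>
record lb_instance =
  dim :: nat
  narms :: "nat \<Rightarrow> nat"
  ctx :: "nat \<Rightarrow> nat \<Rightarrow> real Matrix.vec"
  theta :: "real Matrix.vec"

definition lin_beta :: "real \<Rightarrow> real \<Rightarrow> real \<Rightarrow> real \<Rightarrow> nat \<Rightarrow> nat \<Rightarrow> real \<Rightarrow> real" where
  "lin_beta R S L lam d n \<gamma> =
     (R * sqrt (real d * ln ((1 + real n * L\<^sup>2 / lam) / \<gamma>)) + sqrt lam * S)\<^sup>2"

text \<open>beta_{t-1} used at round t, with gamma = 1/t^2.\<close>
definition beta_prev :: "real \<Rightarrow> real \<Rightarrow> real \<Rightarrow> real \<Rightarrow> nat \<Rightarrow> nat \<Rightarrow> real" where
  "beta_prev R S L lam d t = lin_beta R S L lam d (t - 1) (1 / (real t)\<^sup>2)"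

text \<open>The LinIMED index of arm a at round t, given V_{t-1} and W_{t-1}.
  -log 0 is read as +infinity (extended reals).\<close>
definition imed_index ::
  "real \<Rightarrow> real \<Rightarrow> real \<Rightarrow> real \<Rightarrow> ('z) lb_instance_scheme \<Rightarrow> nat \<Rightarrow> real mat \<Rightarrow> real Matrix.vec \<Rightarrow> nat \<Rightarrow> ereal" where
  "imed_index R S L lam P t V W a =
     (let th = minv V *\<^sub>v W;
          mu = (\<lambda>b. th \<bullet> ctx P t b);
          m = Max (mu ` {..<narms P t});
          g = beta_prev R S L lam (dim P) t * (wnorm (minv V) (ctx P t a))\<^sup>2
      in if g = 0 then PInfty
         else if mu a = m then ereal (- ln g)
         else ereal ((m - mu a)\<^sup>2 / g - ln g))"

text \<open>Chosen arm at round t: an arg-min of the index (ties broken by smallest arm index).\<close>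
definition linimed_choice ::
  "real \<Rightarrow> real \<Rightarrow> real \<Rightarrow> real \<Rightarrow> ('z) lb_instance_scheme \<Rightarrow> nat \<Rightarrow> real mat \<Rightarrow> real Matrix.vec \<Rightarrow> nat" where
  "linimed_choice R S L lam P t V W =
     (LEAST a. a < narms P t \<and>
        (\<forall>b < narms P t. imed_index R S L lam P t V W a \<le> imed_index R S L lam P t V W b))"

text \<open>State (V_t, W_t) after t rounds; the noise realisation is omega, eta_t = omega t.\<close>
primrec linimed_state ::
  "real \<Rightarrow> real \<Rightarrow> real \<Rightarrow> real \<Rightarrow> ('z) lb_instance_scheme \<Rightarrow> (nat \<Rightarrow> real) \<Rightarrow> nat \<Rightarrow> real mat \<times> real Matrix.vec" where
  "linimed_state R S L lam P \<omega> 0 = (lam \<cdot>\<^sub>m 1\<^sub>m (dim P), 0\<^sub>v (dim P))"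
| "linimed_state R S L lam P \<omega> (Suc t) =
     (let VW = linimed_state R S L lam P \<omega> t;
          a = linimed_choice R S L lam P (Suc t) (fst VW) (snd VW);
          X = ctx P (Suc t) a;
          Y = theta P \<bullet> X + \<omega> (Suc t)
      in (fst VW + outer X, snd VW + Y \<cdot>\<^sub>v X))"

definition Vprev where "Vprev R S L lam P \<omega> t = fst (linimed_state R S L lam P \<omega> (t - 1))"
definition Wprev where "Wprev R S L lam P \<omega> t = snd (linimed_state R S L lam P \<omega> (t - 1))"

text \<open>A_t, X_t and hat theta_{t-1} (indexed by the round t).\<close>
definition arm where
  "arm R S L lam P \<omega> t = linimed_choice R S L lam P t (Vprev R S L lam P \<omega> t) (Wprev R S L lam P \<omega> t)"
definition thetahat where
  "thetahat R S L lam P \<omega> t = minv (Vprev R S L lam P \<omega> t) *\<^sub>v Wprev R S L lam P \<omega> t"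

definition best_val :: "('z) lb_instance_scheme \<Rightarrow> nat \<Rightarrow> real" where
  "best_val P t = Max ((\<lambda>a. theta P \<bullet> ctx P t a) ` {..<narms P t})"

definition gap where
  "gap R S L lam P \<omega> t = best_val P t - theta P \<bullet> ctx P t (arm R S L lam P \<omega> t)"

definition event_B where
  "event_B R S L lam P \<omega> t \<longleftrightarrow>
     wnorm (Vprev R S L lam P \<omega> t) (thetahat R S L lam P \<omega> t - theta P)
       \<le> sqrt (beta_prev R S L lam (dim P) t)"

definition event_C where
  "event_C R S L lam P T \<omega> t \<longleftrightarrow>
     Max ((\<lambda>b. thetahat R S L lam P \<omega> t \<bullet> ctx P t b) ` {..<narms P t})
       > best_val P t - gap R S L lam P \<omega> t / sqrt (ln (real T))"

definition emp_gap where
  "emp_gap R S L lam P \<omega> t a =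
     Max ((\<lambda>b. thetahat R S L lam P \<omega> t \<bullet> ctx P t b) ` {..<narms P t})
       - thetahat R S L lam P \<omega> t \<bullet> ctx P t a"

definition event_D where
  "event_D R S L lam P T \<omega> t \<longleftrightarrow>
     emp_gap R S L lam P \<omega> t (arm R S L lam P \<omega> t)
       \<ge> (1 - 2 / sqrt (ln (real T))) * gap R S L lam P \<omega> t"

definition F2 :: "real \<Rightarrow> real \<Rightarrow> real \<Rightarrow> real \<Rightarrow> ('z) lb_instance_scheme \<Rightarrow> nat \<Rightarrow> (nat \<Rightarrow> real) measure \<Rightarrow> real" where
  "F2 R S L lam P T M =
     (\<integral>\<omega>. (\<Sum>t\<in>{1..T}. gap R S L lam P \<omega> t *
        (if event_B R S L lam P \<omega> t \<and> event_C R S L lam P T \<omega> t \<and> \<not> event_D R S L lam P T \<omega> t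
         then 1 else 0)) \<partial>M)"

definition beta_T :: "real \<Rightarrow> real \<Rightarrow> real \<Rightarrow> real \<Rightarrow> nat \<Rightarrow> nat \<Rightarrow> real" where
  "beta_T R S L lam d T = lin_beta R S L lam d T (1 / (real T)\<^sup>2)"

definition assumption1 :: "real \<Rightarrow> real \<Rightarrow> ('z) lb_instance_scheme \<Rightarrow> nat \<Rightarrow> bool" where
  "assumption1 S L P T \<longleftrightarrow>
     theta P \<in> carrier_vec (dim P) \<and> vnorm (theta P) \<le> S \<and>
     (\<forall>t\<in>{1..T}. narms P t \<ge> 1 \<and>
        (\<forall>a < narms P t. ctx P t a \<in> carrier_vec (dim P) \<and> vnorm (ctx P t a) \<le> L) \<and>
        (\<forall>b < narms P t. best_val P t - theta P \<bullet> ctx P t b \<le> 1))"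

definition hist :: "nat \<Rightarrow> (nat \<Rightarrow> real) measure" where
  "hist t = sigma UNIV {(\<lambda>\<omega>. \<omega> i) -` A | i A. i \<in> {1..t} \<and> A \<in> sets borel}"

definition subgauss_noise :: "real \<Rightarrow> nat \<Rightarrow> (nat \<Rightarrow> real) measure \<Rightarrow> bool" where
  "subgauss_noise R T M \<longleftrightarrow>
     prob_space M \<and> sets M = sets (\<Pi>\<^sub>M i\<in>(UNIV::nat set). (borel :: real measure)) \<and>
     (\<forall>t\<in>{1..T}. \<forall>s::real.
        integrable M (\<lambda>\<omega>. exp (s * \<omega> t)) \<and>
        (AE \<omega> in M. real_cond_exp M (hist (t - 1)) (\<lambda>\<omega>. exp (s * \<omega> t)) \<omega> \<le> exp (s\<^sup>2 * R\<^sup>2 / 2)))"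

end

theory Submission imports Defs "Jordan_Normal_Form.Determinant" begin

lemma outer_carrier[simp]: "x \<in> carrier_vec n \<Longrightarrow> outer x \<in> carrier_mat n n"
  unfolding outer_def by auto

lemma outer_mult_vec:
  assumes "x \<in> carrier_vec n" "w \<in> carrier_vec n"
  shows "outer x *\<^sub>v w = (x \<bullet> w) \<cdot>\<^sub>v x"
proof (rule eq_vecI)
  show "dim_vec (outer x *\<^sub>v w) = dim_vec ((x \<bullet> w) \<cdot>\<^sub>v x)" using assms by (simp add: outer_def)
  fix i assume "i < dim_vec ((x \<bullet> w) \<cdot>\<^sub>v x)"
  then have i: "i < n" using assms by simp
  have "(outer x *\<^sub>v w) $ i = (\<Sum>j<n. x $ i * x $ j * w $ j)"
    using assms i by (simp add: outer_def mult_mat_vec_def scalar_prod_def row_def atLeast0LessThan)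
  also have "\<dots> = x $ i * (\<Sum>j<n. x $ j * w $ j)" by (simp add: sum_distrib_left mult.assoc)
  also have "\<dots> = ((x \<bullet> w) \<cdot>\<^sub>v x) $ i" using assms i
    by (simp add: scalar_prod_def atLeast0LessThan mult.commute)
  finally show "(outer x *\<^sub>v w) $ i = ((x \<bullet> w) \<cdot>\<^sub>v x) $ i" .
qed

lemma quad_outer:
  assumes "x \<in> carrier_vec n" "w \<in> carrier_vec n" "u \<in> carrier_vec n"
  shows "u \<bullet> (outer x *\<^sub>v w) = (x \<bullet> u) * (x \<bullet> w)"
  using assms by (simp add: outer_mult_vec comm_scalar_prod[of u n x])

definition goodm :: "nat \<Rightarrow> real \<Rightarrow> real mat \<Rightarrow> bool" where
  "goodm n c V \<longleftrightarrow> V \<in> carrier_mat n n \<and> c > 0 \<and>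
     (\<forall>u\<in>carrier_vec n. \<forall>w\<in>carrier_vec n. u \<bullet> (V *\<^sub>v w) = w \<bullet> (V *\<^sub>v u)) \<and>
     (\<forall>u\<in>carrier_vec n. c * (u \<bullet> u) \<le> u \<bullet> (V *\<^sub>v u))"

lemma self_scalar_zero:
  fixes u :: "real Matrix.vec"
  assumes "u \<in> carrier_vec n" "u \<bullet> u = 0" shows "u = 0\<^sub>v n"
proof (rule eq_vecI)
  have "(\<Sum>i<n. u $ i * u $ i) = 0" using assms by (simp add: scalar_prod_def atLeast0LessThan)
  then have "\<forall>i\<in>{..<n}. u $ i * u $ i = 0"
    by (subst sum_nonneg_eq_0_iff[symmetric]) auto
  then show "\<And>i. i < dim_vec (0\<^sub>v n) \<Longrightarrow> u $ i = 0\<^sub>v n $ i" by auto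
  show "dim_vec u = dim_vec (0\<^sub>v n)" using assms by simp
qed

lemma goodm_det: assumes "goodm n c V" shows "Determinant.det V \<noteq> 0"
proof
  assume "Determinant.det V = 0"
  then obtain v where v: "v \<in> carrier_vec n" "v \<noteq> 0\<^sub>v n" "V *\<^sub>v v = 0\<^sub>v n"
    using det_0_iff_vec_prod_zero_field[of V n] assms goodm_def by auto
  have "c * (v \<bullet> v) \<le> 0" using assms v unfolding goodm_def by auto
  moreover have "v \<bullet> v \<ge> 0" using v by (simp add: scalar_prod_def atLeast0LessThan sum_nonneg)
  ultimately have "v \<bullet> v = 0" using assms goodm_def by (smt (verit) mult_pos_pos)
  then show False using self_scalar_zero v by blast
qed

lemma goodm_inv:
  assumes "goodm n c V"
  shows "V * minv V = 1\<^sub>m n" "minv V * V = 1\<^sub>m n" "minv V \<in> carrier_mat n n"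
proof -
  have Vc: "V \<in> carrier_mat n n" using assms goodm_def by auto
  have "V \<in> Units (ring_mat TYPE(real) n ())"
    using det_non_zero_imp_unit[OF Vc goodm_det[OF assms]] .
  then obtain B where "mat_inverse V = Some B"
    using mat_inverse(1)[OF Vc, of "()"] by (cases "mat_inverse V") auto
  then have "V * B = 1\<^sub>m n \<and> B * V = 1\<^sub>m n \<and> B \<in> carrier_mat n n" "minv V = B"
    using mat_inverse(2)[OF Vc] by (auto simp: minv_def)
  then show "V * minv V = 1\<^sub>m n" "minv V * V = 1\<^sub>m n" "minv V \<in> carrier_mat n n" by auto
qed

lemma goodm_inv_vec:
  assumes "goodm n c V" "x \<in> carrier_vec n"
  shows "V *\<^sub>v (minv V *\<^sub>v x) = x" "minv V *\<^sub>v x \<in> carrier_vec n"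
proof -
  have Vc: "V \<in> carrier_mat n n" using assms goodm_def by auto
  note I = goodm_inv[OF assms(1)]
  have "V *\<^sub>v (minv V *\<^sub>v x) = (V * minv V) *\<^sub>v x"
    using Vc I assms by (metis assoc_mult_mat_vec)
  also have "\<dots> = x" using I assms by simp
  finally show "V *\<^sub>v (minv V *\<^sub>v x) = x" .
  show "minv V *\<^sub>v x \<in> carrier_vec n" using I assms(2) by auto
qed

lemma quad_minus:
  fixes V :: "real mat"
  assumes V: "V \<in> carrier_mat n n" and u: "u \<in> carrier_vec n" and z: "z \<in> carrier_vec n"
    and sym: "z \<bullet> (V *\<^sub>v u) = u \<bullet> (V *\<^sub>v z)"
  shows "(u - z) \<bullet> (V *\<^sub>v (u - z)) = u \<bullet> (V *\<^sub>v u) - 2 * (u \<bullet> (V *\<^sub>v z)) + z \<bullet> (V *\<^sub>v z)"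
proof -
  have Vu: "V *\<^sub>v u \<in> carrier_vec n" and Vz: "V *\<^sub>v z \<in> carrier_vec n" using V u z by auto
  have "V *\<^sub>v (u - z) = V *\<^sub>v u - V *\<^sub>v z" using V u z by (rule mult_minus_distrib_mat_vec)
  then have "(u - z) \<bullet> (V *\<^sub>v (u - z)) = (u - z) \<bullet> (V *\<^sub>v u) - (u - z) \<bullet> (V *\<^sub>v z)"
    using scalar_prod_minus_distrib[of "u - z" n "V *\<^sub>v u" "V *\<^sub>v z"] u z Vu Vz by simp
  also have "\<dots> = (u \<bullet> (V *\<^sub>v u) - z \<bullet> (V *\<^sub>v u)) - (u \<bullet> (V *\<^sub>v z) - z \<bullet> (V *\<^sub>v z))"
    using minus_scalar_prod_distrib[OF u z Vu] minus_scalar_prod_distrib[OF u z Vz] by simp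
  finally show ?thesis using sym by simp
qed

lemma goodm_var:
  assumes g: "goodm n c V" and u: "u \<in> carrier_vec n" and x: "x \<in> carrier_vec n"
  shows "2 * (u \<bullet> x) - u \<bullet> (V *\<^sub>v u) \<le> x \<bullet> (minv V *\<^sub>v x)"
proof -
  define z where "z = minv V *\<^sub>v x"
  have z: "z \<in> carrier_vec n" and Vz: "V *\<^sub>v z = x" using goodm_inv_vec[OF g x] z_def by auto
  have V: "V \<in> carrier_mat n n" using g goodm_def by auto
  have sym: "z \<bullet> (V *\<^sub>v u) = u \<bullet> (V *\<^sub>v z)" using g u z goodm_def by auto
  have uz: "u - z \<in> carrier_vec n" using u z by auto
  have "0 \<le> c * ((u - z) \<bullet> (u - z))"
  proof -
    have "(u - z) \<bullet> (u - z) \<ge> 0" using uz by (simp add: scalar_prod_def sum_nonneg)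
    then show ?thesis using g goodm_def by auto
  qed
  also have "\<dots> \<le> (u - z) \<bullet> (V *\<^sub>v (u - z))" using g uz goodm_def by auto
  also have "\<dots> = u \<bullet> (V *\<^sub>v u) - 2 * (u \<bullet> x) + z \<bullet> x"
    using quad_minus[OF V u z sym] Vz by simp
  finally have "2 * (u \<bullet> x) - u \<bullet> (V *\<^sub>v u) \<le> z \<bullet> x" by simp
  also have "z \<bullet> x = x \<bullet> (minv V *\<^sub>v x)" using comm_scalar_prod[OF z x] z_def by simp
  finally show ?thesis .
qed

lemma goodm_qnonneg:
  assumes g: "goodm n c V" and x: "x \<in> carrier_vec n"
  shows "0 \<le> x \<bullet> (minv V *\<^sub>v x)"
proof -
  have V: "V \<in> carrier_mat n n" using g goodm_def by auto
  have "2 * (0\<^sub>v n \<bullet> x) - 0\<^sub>v n \<bullet> (V *\<^sub>v 0\<^sub>v n) \<le> x \<bullet> (minv V *\<^sub>v x)"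
    by (rule goodm_var[OF g _ x]) simp
  then show ?thesis using V x by simp
qed

lemma goodm_cs:
  assumes g: "goodm n c V" and u: "u \<in> carrier_vec n" and x: "x \<in> carrier_vec n"
  shows "(u \<bullet> x)\<^sup>2 \<le> (u \<bullet> (V *\<^sub>v u)) * (x \<bullet> (minv V *\<^sub>v x))"
proof -
  let ?a = "u \<bullet> (V *\<^sub>v u)" and ?q = "x \<bullet> (minv V *\<^sub>v x)" and ?p = "u \<bullet> x"
  have var: "2 * (t * ?p) - t * t * ?a \<le> ?q" for t
  proof -
    have tu: "t \<cdot>\<^sub>v u \<in> carrier_vec n" using u by auto
    have "(t \<cdot>\<^sub>v u) \<bullet> x = t * ?p" using u x by simp
    moreover have "(t \<cdot>\<^sub>v u) \<bullet> (V *\<^sub>v (t \<cdot>\<^sub>v u)) = t * t * ?a"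
    proof -
      have V: "V \<in> carrier_mat n n" using g goodm_def by auto
      have "V *\<^sub>v (t \<cdot>\<^sub>v u) = t \<cdot>\<^sub>v (V *\<^sub>v u)" using V u by (simp add: mult_mat_vec)
      then show ?thesis using V u by simp
    qed
    ultimately show ?thesis using goodm_var[OF g tu x] by simp
  qed
  have a0: "?a \<ge> 0"
  proof -
    have "u \<bullet> u \<ge> 0" using u by (simp add: scalar_prod_def sum_nonneg)
    moreover have "c * (u \<bullet> u) \<le> ?a" "c > 0" using g u unfolding goodm_def by auto
    ultimately show ?thesis by (smt (verit) mult_nonneg_nonneg)
  qed
  show ?thesis
  proof (cases "?a = 0")
    case True
    have "?p = 0"
    proof (rule ccontr)
      assume ne: "?p \<noteq> 0"
      have "2 * (((?q + 1) / (2 * ?p)) * ?p) - 0 \<le> ?q" using var[of "(?q + 1) / (2 * ?p)"] True by simp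
      moreover have "((?q + 1) / (2 * ?p)) * ?p = (?q + 1) / 2" using ne by simp
      ultimately show False by simp
    qed
    then show ?thesis using True by simp
  next
    case False
    then have apos: "?a > 0" using a0 by simp
    have "2 * ((?p / ?a) * ?p) - (?p / ?a) * (?p / ?a) * ?a \<le> ?q" by (rule var)
    then have "?p\<^sup>2 / ?a \<le> ?q" using apos by (simp add: field_simps power2_eq_square)
    then show ?thesis using apos by (simp add: field_simps)
  qed
qed

lemma goodm_loewner:
  assumes g: "goodm n c V" and g': "goodm n c' V'" and x: "x \<in> carrier_vec n"
    and le: "\<And>u. u \<in> carrier_vec n \<Longrightarrow> u \<bullet> (V' *\<^sub>v u) \<le> u \<bullet> (V *\<^sub>v u)"
  shows "x \<bullet> (minv V *\<^sub>v x) \<le> x \<bullet> (minv V' *\<^sub>v x)"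
proof -
  define w where "w = minv V *\<^sub>v x"
  have w: "w \<in> carrier_vec n" and Vw: "V *\<^sub>v w = x" using goodm_inv_vec[OF g x] w_def by auto
  have "x \<bullet> (minv V *\<^sub>v x) = w \<bullet> x" using comm_scalar_prod[OF w x] w_def by simp
  also have "w \<bullet> x = 2 * (w \<bullet> x) - w \<bullet> (V *\<^sub>v w)" using Vw by simp
  also have "\<dots> \<le> 2 * (w \<bullet> x) - w \<bullet> (V' *\<^sub>v w)" using le[OF w] by simp
  also have "\<dots> \<le> x \<bullet> (minv V' *\<^sub>v x)" by (rule goodm_var[OF g' w x])
  finally show ?thesis .
qed

definition bord :: "nat \<Rightarrow> real \<Rightarrow> (nat \<Rightarrow> real) \<Rightarrow> (nat \<Rightarrow> real) \<Rightarrow> (nat \<Rightarrow> nat \<Rightarrow> real) \<Rightarrow> real mat" where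
  "bord n a r c D = Matrix.mat (Suc n) (Suc n) (\<lambda>(i,j). if i = 0 then (if j = 0 then a else r (j - 1))
      else if j = 0 then c (i - 1) else D (i - 1) (j - 1))"

lemma bord_carrier[simp]: "bord n a r c D \<in> carrier_mat (Suc n) (Suc n)"
  by (simp add: bord_def)

lemma bord_dim[simp]: "dim_row (bord n a r c D) = Suc n" "dim_col (bord n a r c D) = Suc n"
  by (simp_all add: bord_def)

lemma bord_index:
  "bord n a r c D $$ (0,0) = a"
  "j < n \<Longrightarrow> bord n a r c D $$ (0, Suc j) = r j"
  "i < n \<Longrightarrow> bord n a r c D $$ (Suc i, 0) = c i"
  "i < n \<Longrightarrow> j < n \<Longrightarrow> bord n a r c D $$ (Suc i, Suc j) = D i j"
  by (auto simp: bord_def)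

lemma bord_eq:
  assumes "M \<in> carrier_mat (Suc n) (Suc n)"
  shows "M = bord n (M $$ (0,0)) (\<lambda>j. M $$ (0, Suc j)) (\<lambda>i. M $$ (Suc i, 0)) (\<lambda>i j. M $$ (Suc i, Suc j))"
  using assms by (intro eq_matI) (auto simp: bord_def gr0_conv_Suc)

lemma bord_mult:
  "bord n a r c D * bord n a' r' c' D' =
   bord n (a * a' + (\<Sum>k<n. r k * c' k)) (\<lambda>j. a * r' j + (\<Sum>k<n. r k * D' k j))
     (\<lambda>i. c i * a' + (\<Sum>k<n. D i k * c' k)) (\<lambda>i j. c i * r' j + (\<Sum>k<n. D i k * D' k j))"
proof (rule eq_matI)
  fix i j assume i: "i < dim_row (bord n (a * a' + (\<Sum>k<n. r k * c' k)) (\<lambda>j. a * r' j + (\<Sum>k<n. r k * D' k j))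
     (\<lambda>i. c i * a' + (\<Sum>k<n. D i k * c' k)) (\<lambda>i j. c i * r' j + (\<Sum>k<n. D i k * D' k j)))"
    and j: "j < dim_col (bord n (a * a' + (\<Sum>k<n. r k * c' k)) (\<lambda>j. a * r' j + (\<Sum>k<n. r k * D' k j))
     (\<lambda>i. c i * a' + (\<Sum>k<n. D i k * c' k)) (\<lambda>i j. c i * r' j + (\<Sum>k<n. D i k * D' k j)))"
  then have i: "i < Suc n" and j: "j < Suc n" by (auto simp: bord_def)
  have "(bord n a r c D * bord n a' r' c' D') $$ (i,j) = (\<Sum>k<Suc n. bord n a r c D $$ (i,k) * bord n a' r' c' D' $$ (k,j))"
    using i j by (simp add: scalar_prod_def atLeast0LessThan del: sum.lessThan_Suc)
  also have "\<dots> = bord n a r c D $$ (i,0) * bord n a' r' c' D' $$ (0,j) + (\<Sum>k<n. bord n a r c D $$ (i,Suc k) * bord n a' r' c' D' $$ (Suc k,j))"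
    by (rule sum.lessThan_Suc_shift)
  finally have eq: "(bord n a r c D * bord n a' r' c' D') $$ (i,j) = \<dots>" .
  show "(bord n a r c D * bord n a' r' c' D') $$ (i,j) = bord n (a * a' + (\<Sum>k<n. r k * c' k)) (\<lambda>j. a * r' j + (\<Sum>k<n. r k * D' k j))
     (\<lambda>i. c i * a' + (\<Sum>k<n. D i k * c' k)) (\<lambda>i j. c i * r' j + (\<Sum>k<n. D i k * D' k j)) $$ (i,j)"
    unfolding eq using i j
    by (cases i; cases j) (auto simp: bord_index intro!: sum.cong)
qed (auto simp: bord_def)

lemma det_bord_col0:
  "Determinant.det (bord n a r (\<lambda>_. 0) D) = a * Determinant.det (Matrix.mat n n (\<lambda>(i,j). D i j))"
proof -
  let ?M = "bord n a r (\<lambda>_. 0) D"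
  obtain A1 A2 A3 A4 where sb: "split_block ?M 1 1 = (A1,A2,A3,A4)" by (cases "split_block ?M 1 1") auto
  have dims: "dim_row ?M = 1 + n" "dim_col ?M = 1 + n" by (auto simp: bord_def)
  note S = split_block[OF sb dims]
  have A3: "A3 = 0\<^sub>m n 1" using sb by (auto simp: split_block_def bord_def intro!: eq_matI)
  have A1: "Determinant.det A1 = a" using sb S(1) by (auto simp: split_block_def bord_def det_single)
  have A4: "A4 = Matrix.mat n n (\<lambda>(i,j). D i j)" using sb by (auto simp: split_block_def bord_def intro!: eq_matI)
  have "Determinant.det ?M = Determinant.det A1 * Determinant.det A4"
    by (subst S(5), rule det_four_block_mat_lower_left_zero[OF S(1) S(2) A3 S(4)])
  then show ?thesis using A1 A4 by simp
qed

lemma transpose_bord: "transpose_mat (bord n a r c D) = bord n a c r (\<lambda>i j. D j i)"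
  by (intro eq_matI) (auto simp: bord_def)

lemma det_bord_row0:
  "Determinant.det (bord n a (\<lambda>_. 0) c D) = a * Determinant.det (Matrix.mat n n (\<lambda>(i,j). D i j))"
proof -
  have "Determinant.det (bord n a (\<lambda>_. 0) c D) = Determinant.det (transpose_mat (bord n a (\<lambda>_. 0) c D))"
    by (rule det_transpose[symmetric, of _ "Suc n"]) simp
  also have "\<dots> = a * Determinant.det (Matrix.mat n n (\<lambda>(i,j). D j i))"
    unfolding transpose_bord by (rule det_bord_col0)
  also have "Matrix.mat n n (\<lambda>(i,j). D j i) = transpose_mat (Matrix.mat n n (\<lambda>(i,j). D i j))"
    by (intro eq_matI) auto
  also have "Determinant.det \<dots> = Determinant.det (Matrix.mat n n (\<lambda>(i,j). D i j))"
    by (rule det_transpose[of _ n]) simp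
  finally show ?thesis .
qed

lemma bord_cong:
  assumes "a = a'" "\<And>j. j < n \<Longrightarrow> r j = r' j" "\<And>i. i < n \<Longrightarrow> c i = c' i"
    "\<And>i j. i < n \<Longrightarrow> j < n \<Longrightarrow> D i j = D' i j"
  shows "bord n a r c D = bord n a' r' c' D'"
  using assms by (intro eq_matI) (auto simp: bord_def)

abbreviation "dlt \<equiv> (\<lambda>(i::nat) j. if i = j then (1::real) else 0)"

lemma mat_dlt: "Matrix.mat n n (\<lambda>(i,j). dlt i j) = 1\<^sub>m n"
  by (intro eq_matI) auto

lemma det_E_low: "Determinant.det (bord n 1 (\<lambda>_. 0) c dlt) = 1"
  using det_bord_row0[of n 1 c dlt] by (simp add: mat_dlt)

lemma det_E_up: "Determinant.det (bord n 1 r (\<lambda>_. 0) dlt) = 1"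
  using det_bord_col0[of n 1 r dlt] by (simp add: mat_dlt)

definition outer2 :: "nat \<Rightarrow> real Matrix.vec \<Rightarrow> real Matrix.vec \<Rightarrow> real mat" where
  "outer2 n w y = Matrix.mat n n (\<lambda>(i,j). w $ i * y $ j)"

lemma sum_dlt1: "i < n \<Longrightarrow> (\<Sum>k<n. dlt i k * f k) = (f i :: real)"
proof -
  assume i: "i < n"
  have "(\<Sum>k<n. dlt i k * f k) = (\<Sum>k\<in>{..<n}. if i = k then f k else 0)" by (intro sum.cong) auto
  also have "\<dots> = f i" using i by (simp add: sum.delta)
  finally show ?thesis .
qed

lemma sum_dlt2: "j < n \<Longrightarrow> (\<Sum>k<n. f k * dlt k j) = (f j :: real)"
proof -
  assume j: "j < n"
  have "(\<Sum>k<n. f k * dlt k j) = (\<Sum>k\<in>{..<n}. if j = k then f k else 0)" by (intro sum.cong) auto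
  also have "\<dots> = f j" using j by (simp add: sum.delta)
  finally show ?thesis .
qed

lemma det_I_outer2:
  assumes w: "w \<in> carrier_vec n" and y: "y \<in> carrier_vec n"
  shows "Determinant.det (1\<^sub>m n + outer2 n w y) = 1 + y \<bullet> w"
proof -
  define K where "K = bord n 1 (\<lambda>j. - y $ j) (\<lambda>i. w $ i) dlt"
  have KC: "K \<in> carrier_mat (Suc n) (Suc n)" by (simp add: K_def)
  have e1: "bord n 1 (\<lambda>_. 0) (\<lambda>i. - w $ i) dlt * K = bord n 1 (\<lambda>j. - y $ j) (\<lambda>_. 0) (\<lambda>i j. dlt i j + w $ i * y $ j)"
    unfolding K_def bord_mult by (rule bord_cong) (auto simp: sum_dlt1 sum_dlt2)
  have "Determinant.det K = Determinant.det (bord n 1 (\<lambda>_. 0) (\<lambda>i. - w $ i) dlt * K)"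
    using det_mult[OF bord_carrier[of n 1 "\<lambda>_. 0" "\<lambda>i. - w $ i" dlt] KC] det_E_low by simp
  also have "\<dots> = Determinant.det (Matrix.mat n n (\<lambda>(i,j). dlt i j + w $ i * y $ j))"
    unfolding e1 by (simp add: det_bord_col0)
  also have "Matrix.mat n n (\<lambda>(i,j). dlt i j + w $ i * y $ j) = 1\<^sub>m n + outer2 n w y"
    by (intro eq_matI) (auto simp: outer2_def)
  finally have k1: "Determinant.det K = Determinant.det (1\<^sub>m n + outer2 n w y)" .
  have e2: "bord n 1 (\<lambda>j. y $ j) (\<lambda>_. 0) dlt * K = bord n (1 + y \<bullet> w) (\<lambda>_. 0) (\<lambda>i. w $ i) dlt"
    unfolding K_def bord_mult
    by (rule bord_cong) (use w y in \<open>auto simp: sum_dlt1 sum_dlt2 scalar_prod_def atLeast0LessThan\<close>)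
  have "Determinant.det K = Determinant.det (bord n 1 (\<lambda>j. y $ j) (\<lambda>_. 0) dlt * K)"
    using det_mult[OF bord_carrier[of n 1 "\<lambda>j. y $ j" "\<lambda>_. 0" dlt] KC] det_E_up by simp
  also have "\<dots> = 1 + y \<bullet> w"
    unfolding e2 by (simp add: det_bord_row0 mat_dlt)
  finally show ?thesis using k1 by simp
qed

lemma det_rank_one:
  assumes g: "goodm n c U" and y: "y \<in> carrier_vec n"
  shows "Determinant.det (U + outer y) = Determinant.det U * (1 + y \<bullet> (minv U *\<^sub>v y))"
proof -
  define w where "w = minv U *\<^sub>v y"
  have w: "w \<in> carrier_vec n" and Uw: "U *\<^sub>v w = y" using goodm_inv_vec[OF g y] w_def by auto
  have U: "U \<in> carrier_mat n n" using g goodm_def by auto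
  have O: "outer2 n w y \<in> carrier_mat n n" by (simp add: outer2_def)
  have UO: "U * outer2 n w y = outer y"
  proof (rule eq_matI)
    fix i j assume "i < dim_row (outer y)" "j < dim_col (outer y)"
    then have i: "i < n" and j: "j < n" using y by (auto simp: outer_def)
    have "(U * outer2 n w y) $$ (i,j) = (\<Sum>k<n. U $$ (i,k) * (w $ k * y $ j))"
      using U i j by (simp add: outer2_def scalar_prod_def atLeast0LessThan)
    also have "\<dots> = (\<Sum>k<n. U $$ (i,k) * w $ k) * y $ j"
      by (simp add: sum_distrib_right mult.assoc)
    also have "(\<Sum>k<n. U $$ (i,k) * w $ k) = (U *\<^sub>v w) $ i"
      using U w i by (simp add: mult_mat_vec_def scalar_prod_def atLeast0LessThan)
    finally show "(U * outer2 n w y) $$ (i,j) = outer y $$ (i,j)"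
      using Uw i j y by (simp add: outer_def)
  qed (use U y in \<open>auto simp: outer_def outer2_def\<close>)
  have "U * (1\<^sub>m n + outer2 n w y) = U * 1\<^sub>m n + U * outer2 n w y"
    by (rule mult_add_distrib_mat[OF U]) (use O in auto)
  then have "U + outer y = U * (1\<^sub>m n + outer2 n w y)"
    using U by (simp add: UO)
  then have "Determinant.det (U + outer y) = Determinant.det U * Determinant.det (1\<^sub>m n + outer2 n w y)"
    using det_mult[OF U, of "1\<^sub>m n + outer2 n w y"] O by simp
  also have "\<dots> = Determinant.det U * (1 + y \<bullet> w)" using det_I_outer2[OF w y] by simp
  finally show ?thesis using w_def by simp
qed

definition qf :: "nat \<Rightarrow> real mat \<Rightarrow> (nat \<Rightarrow> real) \<Rightarrow> real" where
  "qf n M u = (\<Sum>i<n. \<Sum>j<n. u i * M $$ (i,j) * u j)"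

lemma qf_bord:
  "qf (Suc n) (bord n a r c D) v = v 0 * a * v 0 + (\<Sum>j<n. v 0 * r j * v (Suc j))
     + (\<Sum>i<n. v (Suc i) * c i * v 0) + (\<Sum>i<n. \<Sum>j<n. v (Suc i) * D i j * v (Suc j))"
  unfolding qf_def by (simp add: sum.lessThan_Suc_shift bord_index sum.distrib del: sum.lessThan_Suc)

lemma qf_unit:
  assumes i: "i < n"
  shows "qf n M (\<lambda>j. if j = i then 1 else 0) = M $$ (i,i)"
proof -
  let ?u = "\<lambda>j. if j = i then (1::real) else 0"
  have "(\<Sum>j<n. ?u k * M $$ (k,j) * ?u j) = (if k = i then M $$ (i,i) else 0)" for k
  proof -
    have "(\<Sum>j<n. ?u k * M $$ (k,j) * ?u j) = (\<Sum>j\<in>{..<n}. if j = i then ?u k * M $$ (k,i) else 0)"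
      by (intro sum.cong) auto
    also have "\<dots> = ?u k * M $$ (k,i)" using i by (simp add: sum.delta')
    finally show ?thesis by simp
  qed
  then have "qf n M ?u = (\<Sum>k\<in>{..<n}. if k = i then M $$ (i,i) else 0)" unfolding qf_def by simp
  also have "\<dots> = M $$ (i,i)" using i by (simp add: sum.delta')
  finally show ?thesis .
qed

lemma hadamard:
  "M \<in> carrier_mat n n \<Longrightarrow> (\<forall>i<n. \<forall>j<n. M $$ (i,j) = M $$ (j,i)) \<Longrightarrow>
   (\<forall>u. (\<exists>i<n. u i \<noteq> 0) \<longrightarrow> qf n M u > 0) \<Longrightarrow>
   Determinant.det M \<le> (\<Prod>i<n. M $$ (i,i))"
proof (induction n arbitrary: M)
  case 0
  then show ?case by simp
next
  case (Suc n)
  define a where "a = M $$ (0,0)"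
  define c where "c = (\<lambda>i. M $$ (Suc i, 0))"
  define D where "D = (\<lambda>i j. M $$ (Suc i, Suc j))"
  have "M = bord n a (\<lambda>j. M $$ (0, Suc j)) c D" unfolding a_def c_def D_def by (rule bord_eq[OF Suc.prems(1)])
  also have "\<dots> = bord n a c c D"
  proof (rule bord_cong)
    fix j assume "j < n"
    then show "M $$ (0, Suc j) = c j" unfolding c_def using Suc.prems(2) by blast
  qed auto
  finally have M: "M = bord n a c c D" .
  have Dsym: "D i j = D j i" if "i < n" "j < n" for i j unfolding D_def using Suc.prems(2) that by blast
  have "qf (Suc n) M (\<lambda>i. if i = 0 then 1 else 0) > 0" by (rule Suc.prems(3)[rule_format]) auto
  then have apos: "a > 0" unfolding M qf_bord by simp
  define S where "S = (\<lambda>i j. D i j - c i * c j / a)"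
  have EM: "bord n 1 (\<lambda>_. 0) (\<lambda>i. - c i / a) dlt * M = bord n a c (\<lambda>_. 0) S"
    unfolding M bord_mult S_def by (rule bord_cong) (use apos in \<open>auto simp: sum_dlt1\<close>)
  have "Determinant.det M = Determinant.det (bord n 1 (\<lambda>_. 0) (\<lambda>i. - c i / a) dlt * M)"
    using det_mult[OF bord_carrier[of n 1 "\<lambda>_. 0" "\<lambda>i. - c i / a" dlt] Suc.prems(1)] det_E_low by simp
  also have "\<dots> = a * Determinant.det (Matrix.mat n n (\<lambda>(i,j). S i j))"
    unfolding EM by (rule det_bord_col0)
  finally have detM: "Determinant.det M = a * Determinant.det (Matrix.mat n n (\<lambda>(i,j). S i j))" .
  let ?S = "Matrix.mat n n (\<lambda>(i,j). S i j)"
  have qfS: "qf n ?S u = qf (Suc n) M (\<lambda>i. if i = 0 then - (\<Sum>j<n. c j * u j) / a else u (i - 1))" for u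
  proof -
    define p where "p = (\<Sum>j<n. c j * u j)"
    have "qf n ?S u = (\<Sum>i<n. \<Sum>j<n. u i * D i j * u j - (u i * c i) * (c j * u j) / a)"
      unfolding qf_def S_def by (intro sum.cong refl) (auto simp: algebra_simps)
    also have "\<dots> = (\<Sum>i<n. \<Sum>j<n. u i * D i j * u j) - (\<Sum>i<n. \<Sum>j<n. (u i * c i) * (c j * u j) / a)"
      by (simp add: sum_subtractf)
    also have "(\<Sum>i<n. \<Sum>j<n. (u i * c i) * (c j * u j) / a) = (\<Sum>i<n. u i * c i * p / a)"
      unfolding p_def by (intro sum.cong refl) (simp add: sum_distrib_left sum_divide_distrib)
    also have "\<dots> = (\<Sum>i<n. u i * c i) * p / a"
      by (simp add: sum_distrib_right sum_divide_distrib)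
    finally have l: "qf n ?S u = (\<Sum>i<n. \<Sum>j<n. u i * D i j * u j) - p * p / a"
      unfolding p_def by (simp add: mult.commute)
    define v0 where "v0 = - p / a"
    have "qf (Suc n) M (\<lambda>i. if i = 0 then - p / a else u (i - 1)) =
       v0 * a * v0 + (\<Sum>j<n. v0 * c j * u j) + (\<Sum>i<n. u i * c i * v0) + (\<Sum>i<n. \<Sum>j<n. u i * D i j * u j)"
      unfolding M qf_bord v0_def by simp
    also have "(\<Sum>j<n. v0 * c j * u j) = v0 * p" unfolding p_def sum_distrib_left by (simp add: mult.assoc)
    also have "(\<Sum>i<n. u i * c i * v0) = p * v0" unfolding p_def sum_distrib_right
      by (simp add: mult.commute mult.left_commute)
    also have "v0 * a * v0 + v0 * p + p * v0 = (- p / a) * a * (- p / a) + (- p / a) * p + p * (- p / a)"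
      unfolding v0_def ..
    also have "(- p / a) * a * (- p / a) + (- p / a) * p + p * (- p / a) = - (p * p / a)" using apos
      by (simp add: field_simps)
    finally have A: "qf (Suc n) M (\<lambda>i. if i = 0 then - p / a else u (i - 1)) = (\<Sum>i<n. \<Sum>j<n. u i * D i j * u j) - p * p / a"
      by simp
    show ?thesis unfolding l A[unfolded p_def] p_def ..
  qed
  have Ssym: "\<forall>i<n. \<forall>j<n. ?S $$ (i,j) = ?S $$ (j,i)"
  proof (intro allI impI)
    fix i j assume ij: "i < n" "j < n"
    have "D i j = D j i" using Dsym[OF ij] .
    then show "?S $$ (i,j) = ?S $$ (j,i)" using ij by (simp add: S_def mult.commute)
  qed
  have Spd: "\<forall>u. (\<exists>i<n. u i \<noteq> 0) \<longrightarrow> qf n ?S u > 0"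
  proof (intro allI impI)
    fix u :: "nat \<Rightarrow> real" assume "\<exists>i<n. u i \<noteq> 0"
    then obtain i where i: "i < n" "u i \<noteq> 0" by auto
    have "\<exists>i<Suc n. (\<lambda>i. if i = 0 then - (\<Sum>j<n. c j * u j) / a else u (i - 1)) i \<noteq> 0"
      using i by (intro exI[of _ "Suc i"]) simp
    then show "qf n ?S u > 0" unfolding qfS by (rule Suc.prems(3)[rule_format])
  qed
  have IH: "Determinant.det ?S \<le> (\<Prod>i<n. ?S $$ (i,i))" by (rule Suc.IH[OF _ Ssym Spd]) simp
  have Sdiag_pos: "?S $$ (i,i) > 0" if "i < n" for i
  proof -
    have "qf n ?S (\<lambda>j. if j = i then 1 else 0) > 0" by (rule Spd[rule_format]) (use that in auto)
    moreover have "qf n ?S (\<lambda>j. if j = i then 1 else 0) = ?S $$ (i,i)"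
      using that by (rule qf_unit)
    ultimately show ?thesis by simp
  qed
  have "(\<Prod>i<n. ?S $$ (i,i)) \<le> (\<Prod>i<n. D i i)"
  proof (rule prod_mono)
    fix i assume "i \<in> {..<n}"
    then have i: "i < n" by simp
    have "?S $$ (i,i) = D i i - c i * c i / a" using i by (simp add: S_def)
    moreover have "c i * c i / a \<ge> 0" using apos by simp
    ultimately show "0 \<le> ?S $$ (i,i) \<and> ?S $$ (i,i) \<le> D i i" using Sdiag_pos[OF i] by simp
  qed
  then have "Determinant.det M \<le> a * (\<Prod>i<n. D i i)" unfolding detM using IH apos
    by (meson dual_order.trans mult_le_cancel_left_pos)
  also have "\<dots> = (\<Prod>i<Suc n. M $$ (i,i))"
    unfolding a_def D_def by (simp add: prod.lessThan_Suc_shift del: prod.lessThan_Suc)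
  finally show ?case .
qed

lemma sum_dlt3: "i < d \<Longrightarrow> (\<Sum>j = 0..<d. k * dlt j i * f j) = (k * f i :: real)"
proof -
  assume i: "i < d"
  have "(\<Sum>j = 0..<d. k * dlt j i * f j) = (\<Sum>j\<in>{0..<d}. if j = i then k * f j else 0)" by (intro sum.cong) auto
  also have "\<dots> = k * f i" using i by (simp add: sum.delta')
  finally show ?thesis .
qed

lemma smult_one_mult_vec: assumes w: "w \<in> carrier_vec d" shows "(k \<cdot>\<^sub>m 1\<^sub>m d) *\<^sub>v w = (k :: real) \<cdot>\<^sub>v w"
proof (rule eq_vecI)
  fix i assume "i < dim_vec (k \<cdot>\<^sub>v w)"
  then have i: "i < d" using w by simp
  have "(k \<cdot>\<^sub>m 1\<^sub>m d *\<^sub>v w) $ i = k * w $ i"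
    using i w by (simp add: mult_mat_vec_def scalar_prod_def row_def sum_dlt3)
  then show "(k \<cdot>\<^sub>m 1\<^sub>m d *\<^sub>v w) $ i = (k \<cdot>\<^sub>v w) $ i" using i w by simp
qed (use w in simp)

primrec Um :: "nat \<Rightarrow> real \<Rightarrow> (nat \<Rightarrow> real Matrix.vec) \<Rightarrow> nat set \<Rightarrow> nat \<Rightarrow> real mat" where
  "Um d lam X S 0 = lam \<cdot>\<^sub>m 1\<^sub>m d"
| "Um d lam X S (Suc t) = (if Suc t \<in> S then Um d lam X S t + outer (X (Suc t)) else Um d lam X S t)"

lemma Int_Suc: "{1..Suc t} \<inter> S = (if Suc t \<in> S then insert (Suc t) ({1..t} \<inter> S) else {1..t} \<inter> S)"
  by (auto simp: le_Suc_eq)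

lemma qf_vec:
  assumes M: "M \<in> carrier_mat d d"
  shows "qf d M u = Matrix.vec d u \<bullet> (M *\<^sub>v Matrix.vec d u)"
proof -
  have "Matrix.vec d u \<bullet> (M *\<^sub>v Matrix.vec d u) = (\<Sum>i<d. u i * (\<Sum>j<d. M $$ (i,j) * u j))"
    using M by (simp add: scalar_prod_def mult_mat_vec_def row_def atLeast0LessThan)
  also have "\<dots> = qf d M u" unfolding qf_def by (simp add: sum_distrib_left mult.assoc)
  finally show ?thesis by simp
qed

lemma mat_entry_quad:
  fixes M :: "real mat"
  assumes M: "M \<in> carrier_mat d d" and i: "i < d" and j: "j < d"
  shows "unit_vec d i \<bullet> (M *\<^sub>v unit_vec d j) = M $$ (i,j)"
proof -
  have c: "M *\<^sub>v unit_vec d j \<in> carrier_vec d" using M by auto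
  have "unit_vec d i \<bullet> (M *\<^sub>v unit_vec d j) = (M *\<^sub>v unit_vec d j) $ i"
    using scalar_prod_left_unit[OF c i] .
  also have "\<dots> = Matrix.row M i \<bullet> unit_vec d j" using M i by simp
  also have "\<dots> = M $$ (i,j)" using M i j by (simp add: scalar_prod_right_unit)
  finally show ?thesis .
qed

lemma amgm:
  fixes a :: "nat \<Rightarrow> real"
  assumes d: "d \<ge> 1" and a: "\<And>i. i < d \<Longrightarrow> a i \<ge> 0" and lam: "lam > 0"
  shows "(\<Prod>i<d. lam + a i) \<le> (lam + (\<Sum>i<d. a i) / d) ^ d"
proof -
  let ?x = "\<lambda>i. lam + a i"
  have xpos: "\<And>i. i \<in> {..<d} \<Longrightarrow> ?x i > 0" using a lam by (simp add: add_pos_nonneg)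
  have "(\<Sum>i\<in>{..<d}. ?x i / card {..<d}) \<ge> (\<Prod>i\<in>{..<d}. ?x i) powr (1 / card {..<d})"
    by (rule arith_geom_mean) (use d xpos in \<open>auto simp: less_imp_le lessThan_empty_iff\<close>)
  moreover have "(\<Sum>i\<in>{..<d}. ?x i / card {..<d}) = lam + (\<Sum>i<d. a i) / d"
    using d by (simp add: sum_divide_distrib[symmetric] sum.distrib field_simps)
  ultimately have ge: "(\<Prod>i<d. ?x i) powr (1 / d) \<le> lam + (\<Sum>i<d. a i) / d" by simp
  have P: "(\<Prod>i<d. ?x i) > 0" by (rule prod_pos) (use xpos in auto)
  have "(\<Prod>i<d. ?x i) = ((\<Prod>i<d. ?x i) powr (1 / d)) ^ d"
  proof -
    have "((\<Prod>i<d. ?x i) powr (1 / d)) ^ d = ((\<Prod>i<d. ?x i) powr (1 / d)) powr (real d)"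
      by (rule powr_realpow[symmetric]) (use P in \<open>simp only: powr_gt_zero\<close>)
    also have "\<dots> = (\<Prod>i<d. ?x i)" using P d by (simp add: powr_powr)
    finally show ?thesis by simp
  qed
  also have "\<dots> \<le> (lam + (\<Sum>i<d. a i) / d) ^ d"
    by (rule power_mono[OF ge]) simp
  finally show ?thesis .
qed

locale vpath =
  fixes d :: nat and lam :: real and X :: "nat \<Rightarrow> real Matrix.vec" and T :: nat and L :: real
  assumes lam: "lam > 0"
    and Xc: "\<And>s. s \<in> {1..T} \<Longrightarrow> X s \<in> carrier_vec d"
    and XL: "\<And>s. s \<in> {1..T} \<Longrightarrow> X s \<bullet> X s \<le> L\<^sup>2"
begin

lemma Um_carrier: "t \<le> T \<Longrightarrow> Um d lam X S t \<in> carrier_mat d d"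
  by (induction t) (auto simp: Xc)

lemma Um_quad:
  assumes "t \<le> T" "u \<in> carrier_vec d" "w \<in> carrier_vec d"
  shows "u \<bullet> (Um d lam X S t *\<^sub>v w) = lam * (u \<bullet> w) + (\<Sum>s\<in>{1..t} \<inter> S. (X s \<bullet> u) * (X s \<bullet> w))"
  using assms(1)
proof (induction t)
  case 0
  then show ?case using assms by (simp add: smult_one_mult_vec)
next
  case (Suc t)
  then have t: "t \<le> T" by simp
  have fin: "finite ({1..t} \<inter> S)" by simp
  show ?case
  proof (cases "Suc t \<in> S")
    case True
    have Xs: "X (Suc t) \<in> carrier_vec d" using Suc.prems by (intro Xc) auto
    have "Um d lam X S (Suc t) *\<^sub>v w = Um d lam X S t *\<^sub>v w + outer (X (Suc t)) *\<^sub>v w"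
      using True by (simp add: add_mult_distrib_mat_vec[OF Um_carrier[OF t] outer_carrier[OF Xs] assms(3)])
    moreover have c1: "Um d lam X S t *\<^sub>v w \<in> carrier_vec d" using mult_mat_vec_carrier[OF Um_carrier[OF t, of S] assms(3)] .
    moreover have c2: "outer (X (Suc t)) *\<^sub>v w \<in> carrier_vec d" using mult_mat_vec_carrier[OF outer_carrier[OF Xs] assms(3)] .
    ultimately have "u \<bullet> (Um d lam X S (Suc t) *\<^sub>v w) = u \<bullet> (Um d lam X S t *\<^sub>v w) + u \<bullet> (outer (X (Suc t)) *\<^sub>v w)"
      using scalar_prod_add_distrib[OF assms(2) c1 c2] by simp
    also have "\<dots> = lam * (u \<bullet> w) + (\<Sum>s\<in>{1..t} \<inter> S. (X s \<bullet> u) * (X s \<bullet> w)) + (X (Suc t) \<bullet> u) * (X (Suc t) \<bullet> w)"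
      using Suc.IH[OF t] quad_outer[OF Xs assms(3) assms(2)] by simp
    also have "\<dots> = lam * (u \<bullet> w) + (\<Sum>s\<in>{1..Suc t} \<inter> S. (X s \<bullet> u) * (X s \<bullet> w))"
      unfolding Int_Suc using True fin by (simp add: sum.insert)
    finally show ?thesis .
  next
    case False
    then show ?thesis using Suc.IH[OF t] unfolding Int_Suc by simp
  qed
qed

lemma Um_good:
  assumes "t \<le> T"
  shows "goodm d lam (Um d lam X S t)"
  unfolding goodm_def
proof (intro conjI ballI)
  show "Um d lam X S t \<in> carrier_mat d d" using Um_carrier[OF assms] .
  show "0 < lam" using lam .
  fix u w :: "real Matrix.vec" assume u: "u \<in> carrier_vec d" and w: "w \<in> carrier_vec d"
  show "u \<bullet> (Um d lam X S t *\<^sub>v w) = w \<bullet> (Um d lam X S t *\<^sub>v u)"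
    unfolding Um_quad[OF assms u w] Um_quad[OF assms w u] using comm_scalar_prod[OF u w]
    by (simp add: mult.commute)
next
  fix u :: "real Matrix.vec" assume u: "u \<in> carrier_vec d"
  show "lam * (u \<bullet> u) \<le> u \<bullet> (Um d lam X S t *\<^sub>v u)"
    unfolding Um_quad[OF assms u u] by (auto intro!: sum_nonneg)
qed

lemma Um_diag:
  assumes "t \<le> T" "i < d"
  shows "Um d lam X S t $$ (i,i) = lam + (\<Sum>s\<in>{1..t} \<inter> S. (X s $ i)\<^sup>2)"
  using assms(1)
proof (induction t)
  case 0
  then show ?case using assms by simp
next
  case (Suc t)
  then have t: "t \<le> T" by simp
  have fin: "finite ({1..t} \<inter> S)" by simp
  show ?case
  proof (cases "Suc t \<in> S")
    case True
    have Xs: "X (Suc t) \<in> carrier_vec d" using Suc.prems by (intro Xc) auto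
    have "Um d lam X S (Suc t) $$ (i,i) = Um d lam X S t $$ (i,i) + outer (X (Suc t)) $$ (i,i)"
      using True carrier_matD[OF Um_carrier[OF t]] carrier_matD[OF outer_carrier[OF Xs]] assms(2) by simp
    also have "\<dots> = lam + (\<Sum>s\<in>{1..t} \<inter> S. (X s $ i)\<^sup>2) + (X (Suc t) $ i)\<^sup>2"
      using Suc.IH[OF t] Xs assms(2) by (simp add: outer_def power2_eq_square)
    finally show ?thesis unfolding Int_Suc using True fin by (simp add: sum.insert)
  next
    case False
    then show ?thesis using Suc.IH[OF t] unfolding Int_Suc by simp
  qed
qed

lemma Um_det:
  assumes "t \<le> T"
  shows "Determinant.det (Um d lam X S t) =
    lam ^ d * (\<Prod>s\<in>{1..t} \<inter> S. 1 + X s \<bullet> (minv (Um d lam X S (s - 1)) *\<^sub>v X s))"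
  using assms
proof (induction t)
  case 0
  then show ?case by simp
next
  case (Suc t)
  then have t: "t \<le> T" by simp
  have fin: "finite ({1..t} \<inter> S)" by simp
  show ?case
  proof (cases "Suc t \<in> S")
    case True
    have Xs: "X (Suc t) \<in> carrier_vec d" using Suc.prems by (intro Xc) auto
    have "Determinant.det (Um d lam X S (Suc t)) = Determinant.det (Um d lam X S t) * (1 + X (Suc t) \<bullet> (minv (Um d lam X S t) *\<^sub>v X (Suc t)))"
      using True det_rank_one[OF Um_good[OF t] Xs] by simp
    then show ?thesis unfolding Int_Suc using True fin Suc.IH[OF t] by (simp add: sum.insert)
  next
    case False
    then show ?thesis using Suc.IH[OF t] unfolding Int_Suc by simp
  qed
qed

lemma Um_hadamard:
  assumes t: "t \<le> T"
  shows "Determinant.det (Um d lam X S t) \<le> (\<Prod>i<d. Um d lam X S t $$ (i,i))"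
proof (rule hadamard)
  have C: "Um d lam X S t \<in> carrier_mat d d" using Um_carrier[OF t] .
  show "Um d lam X S t \<in> carrier_mat d d" by fact
  show "\<forall>i<d. \<forall>j<d. Um d lam X S t $$ (i,j) = Um d lam X S t $$ (j,i)"
  proof (intro allI impI)
    fix i j assume i: "i < d" and j: "j < d"
    have "Um d lam X S t $$ (i,j) = unit_vec d i \<bullet> (Um d lam X S t *\<^sub>v unit_vec d j)"
      using mat_entry_quad[OF C i j] by simp
    also have "\<dots> = unit_vec d j \<bullet> (Um d lam X S t *\<^sub>v unit_vec d i)"
      using Um_good[OF t, of S] unfolding goodm_def by auto
    also have "\<dots> = Um d lam X S t $$ (j,i)" using mat_entry_quad[OF C j i] by simp
    finally show "Um d lam X S t $$ (i,j) = Um d lam X S t $$ (j,i)" .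
  qed
  show "\<forall>u. (\<exists>i<d. u i \<noteq> 0) \<longrightarrow> 0 < qf d (Um d lam X S t) u"
  proof (intro allI impI)
    fix u :: "nat \<Rightarrow> real" assume "\<exists>i<d. u i \<noteq> 0"
    then obtain i where i: "i < d" "u i \<noteq> 0" by auto
    let ?v = "Matrix.vec d u"
    have v: "?v \<in> carrier_vec d" by simp
    have "?v \<noteq> 0\<^sub>v d" using i by (metis index_vec index_zero_vec(1))
    then have "?v \<bullet> ?v \<noteq> 0" using self_scalar_zero[OF v] by blast
    moreover have "?v \<bullet> ?v \<ge> 0" by (simp add: scalar_prod_def sum_nonneg)
    ultimately have "?v \<bullet> ?v > 0" by simp
    then have "lam * (?v \<bullet> ?v) > 0" using lam by simp
    also have "lam * (?v \<bullet> ?v) \<le> ?v \<bullet> (Um d lam X S t *\<^sub>v ?v)"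
      using Um_good[OF t, of S] v unfolding goodm_def by auto
    finally show "0 < qf d (Um d lam X S t) u" unfolding qf_vec[OF C] .
  qed
qed

lemma potential:
  assumes d: "d \<ge> 1"
  shows "(\<Sum>s\<in>{1..T} \<inter> S. ln (1 + X s \<bullet> (minv (Um d lam X S (s - 1)) *\<^sub>v X s)))
     \<le> d * ln (1 + card ({1..T} \<inter> S) * L\<^sup>2 / (d * lam))"
proof -
  let ?I = "{1..T} \<inter> S"
  let ?q = "\<lambda>s. X s \<bullet> (minv (Um d lam X S (s - 1)) *\<^sub>v X s)"
  let ?N = "card ?I"
  have q0: "?q s \<ge> 0" if s: "s \<in> ?I" for s
  proof -
    have "s - 1 \<le> T" "s \<in> {1..T}" using s by auto
    then show ?thesis using goodm_qnonneg[OF Um_good[of "s - 1" S] Xc] by blast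
  qed
  define Q where "Q = (\<Sum>i<d. \<Sum>s\<in>?I. (X s $ i)\<^sup>2)"
  have Q0: "Q \<ge> 0" unfolding Q_def by (simp add: sum_nonneg)
  have "Q = (\<Sum>s\<in>?I. X s \<bullet> X s)"
  proof -
    have "Q = (\<Sum>s\<in>?I. \<Sum>i<d. (X s $ i)\<^sup>2)" unfolding Q_def by (rule sum.swap)
    also have "\<dots> = (\<Sum>s\<in>?I. X s \<bullet> X s)"
    proof (intro sum.cong refl)
      fix s assume "s \<in> ?I"
      then have "X s \<in> carrier_vec d" using Xc by auto
      then show "(\<Sum>i<d. (X s $ i)\<^sup>2) = X s \<bullet> X s" by (simp add: scalar_prod_def atLeast0LessThan power2_eq_square)
    qed
    finally show ?thesis .
  qed
  also have "(\<Sum>s\<in>?I. X s \<bullet> X s) \<le> (\<Sum>s\<in>?I. L\<^sup>2)" by (rule sum_mono) (rule XL, blast)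
  finally have QN: "Q \<le> ?N * L\<^sup>2" by simp
  have "lam ^ d * (\<Prod>s\<in>?I. 1 + ?q s) = Determinant.det (Um d lam X S T)"
    using Um_det[of T S] by simp
  also have "\<dots> \<le> (\<Prod>i<d. Um d lam X S T $$ (i,i))" by (rule Um_hadamard) simp
  also have "\<dots> = (\<Prod>i<d. lam + (\<Sum>s\<in>?I. (X s $ i)\<^sup>2))" by (intro prod.cong refl) (simp add: Um_diag)
  also have "\<dots> \<le> (lam + Q / d) ^ d"
    unfolding Q_def by (rule amgm[OF d _ lam]) (simp add: sum_nonneg)
  also have "\<dots> \<le> (lam + ?N * L\<^sup>2 / d) ^ d"
  proof (rule power_mono)
    show "lam + Q / d \<le> lam + ?N * L\<^sup>2 / d" using QN d by (simp add: divide_right_mono)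
    show "0 \<le> lam + Q / d" using Q0 lam by simp
  qed
  also have "(lam + ?N * L\<^sup>2 / d) ^ d = lam ^ d * (1 + ?N * L\<^sup>2 / (d * lam)) ^ d"
  proof -
    have "lam + ?N * L\<^sup>2 / d = lam * (1 + ?N * L\<^sup>2 / (d * lam))" using lam d by (simp add: field_simps)
    then show ?thesis by (simp add: power_mult_distrib)
  qed
  finally have P: "(\<Prod>s\<in>?I. 1 + ?q s) \<le> (1 + ?N * L\<^sup>2 / (d * lam)) ^ d" using lam by simp
  have pos: "1 + ?q s > 0" if "s \<in> ?I" for s using q0[OF that] by simp
  have Ppos: "(\<Prod>s\<in>?I. 1 + ?q s) > 0" by (rule prod_pos) (use pos in auto)
  have "(\<Sum>s\<in>?I. ln (1 + ?q s)) = ln (\<Prod>s\<in>?I. 1 + ?q s)"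
  proof (rule ln_prod[symmetric])
    show "finite ?I" by simp
    fix s assume "s \<in> ?I" then show "1 + ?q s \<noteq> 0" using pos by fastforce
  qed
  also have "\<dots> \<le> ln ((1 + ?N * L\<^sup>2 / (d * lam)) ^ d)" using P Ppos by simp
  also have "\<dots> = d * ln (1 + ?N * L\<^sup>2 / (d * lam))"
    by (rule ln_realpow)
  finally show ?thesis .
qed

end


section \<open>Connection to the algorithm\<close>

lemma choice_lt:
  assumes "narms P t \<ge> 1"
  shows "linimed_choice R S L lam P t V W < narms P t"
proof -
  let ?n = "narms P t"
  let ?I = "imed_index R S L lam P t V W"
  have fin: "finite (?I ` {..<?n})" and ne: "?I ` {..<?n} \<noteq> {}" using assms by (auto simp: lessThan_empty_iff)
  obtain a0 where a0: "a0 < ?n" "?I a0 = Min (?I ` {..<?n})" using Min_in[OF fin ne] by auto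
  have "\<forall>b<?n. ?I a0 \<le> ?I b" using a0 fin by auto
  then have "\<exists>a. a < ?n \<and> (\<forall>b<?n. ?I a \<le> ?I b)" using a0 by blast
  from LeastI_ex[OF this] show ?thesis unfolding linimed_choice_def by blast
qed

abbreviation Xp where "Xp R S L lam P \<omega> \<equiv> (\<lambda>s. ctx P s (arm R S L lam P \<omega> s))"

lemma state_fst: "fst (linimed_state R S L lam P \<omega> n) = Um (dim P) lam (Xp R S L lam P \<omega>) UNIV n"
  by (induction n) (simp_all add: Let_def arm_def Vprev_def Wprev_def)

lemma Vprev_eq: "Vprev R S L lam P \<omega> t = Um (dim P) lam (Xp R S L lam P \<omega>) UNIV (t - 1)"
  unfolding Vprev_def by (rule state_fst)

lemma arm_lt: "assumption1 S L P T \<Longrightarrow> t \<in> {1..T} \<Longrightarrow> arm R S L lam P \<omega> t < narms P t"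
  unfolding arm_def assumption1_def by (intro choice_lt) auto

lemma Xp_carrier: "assumption1 S L P T \<Longrightarrow> t \<in> {1..T} \<Longrightarrow> Xp R S L lam P \<omega> t \<in> carrier_vec (dim P)"
  using arm_lt[of S L P T t R lam \<omega>] unfolding assumption1_def by auto

lemma Xp_norm: "assumption1 S L P T \<Longrightarrow> t \<in> {1..T} \<Longrightarrow> L \<ge> 0 \<Longrightarrow> Xp R S L lam P \<omega> t \<bullet> Xp R S L lam P \<omega> t \<le> L\<^sup>2"
proof -
  assume A: "assumption1 S L P T" and t: "t \<in> {1..T}" and L: "L \<ge> 0"
  let ?x = "Xp R S L lam P \<omega> t"
  have "vnorm ?x \<le> L" using arm_lt[OF A t, of R lam \<omega>] A t unfolding assumption1_def by auto
  moreover have "?x \<bullet> ?x \<ge> 0" by (simp add: scalar_prod_def sum_nonneg)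
  ultimately have "sqrt (?x \<bullet> ?x) \<le> L" unfolding vnorm_def by simp
  then show ?thesis using L \<open>?x \<bullet> ?x \<ge> 0\<close> by (metis real_sqrt_le_iff real_sqrt_pow2 sqrt_le_D)
qed

lemma state_snd_carrier:
  assumes A: "assumption1 S L P T"
  shows "n \<le> T \<Longrightarrow> snd (linimed_state R S L lam P \<omega> n) \<in> carrier_vec (dim P)"
proof (induction n)
  case 0
  then show ?case by simp
next
  case (Suc n)
  have c: "Xp R S L lam P \<omega> (Suc n) \<in> carrier_vec (dim P)" using Xp_carrier[OF A] Suc.prems by auto
  have "arm R S L lam P \<omega> (Suc n) = linimed_choice R S L lam P (Suc n) (fst (linimed_state R S L lam P \<omega> n)) (snd (linimed_state R S L lam P \<omega> n))"
    by (simp add: arm_def Vprev_def Wprev_def)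
  then show ?case using Suc c by (simp add: Let_def)
qed

lemma gap_bounds:
  assumes A: "assumption1 S L P T" and t: "t \<in> {1..T}"
  shows "0 \<le> gap R S L lam P \<omega> t" "gap R S L lam P \<omega> t \<le> 1"
proof -
  have a: "arm R S L lam P \<omega> t < narms P t" by (rule arm_lt[OF A t])
  have "theta P \<bullet> ctx P t (arm R S L lam P \<omega> t) \<le> best_val P t"
    unfolding best_val_def using a by (intro Max_ge) auto
  then show "0 \<le> gap R S L lam P \<omega> t" unfolding gap_def by simp
  show "gap R S L lam P \<omega> t \<le> 1" unfolding gap_def using A t a unfolding assumption1_def by auto
qed


lemma vpath_inst:
  assumes A: "assumption1 S L P T" and lam: "lam > 0" and L: "L \<ge> 0"
  shows "vpath (dim P) lam (Xp R S L lam P \<omega>) T L"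
  by unfold_locales (use lam Xp_carrier[OF A] Xp_norm[OF A _ L] in auto)

lemma round_bound:
  assumes A: "assumption1 S L P T" and t: "t \<in> {1..T}" and lam: "lam > 0" and L: "L \<ge> 0"
    and T2: "T \<ge> 2"
    and B: "event_B R S L lam P \<omega> t" and C: "event_C R S L lam P T \<omega> t" and nD: "\<not> event_D R S L lam P T \<omega> t"
  shows "(gap R S L lam P \<omega> t)\<^sup>2 \<le> beta_prev R S L lam (dim P) t * ln (real T) *
     (Xp R S L lam P \<omega> t \<bullet> (minv (Vprev R S L lam P \<omega> t) *\<^sub>v Xp R S L lam P \<omega> t))"
proof -
  interpret vpath "dim P" lam "Xp R S L lam P \<omega>" T L by (rule vpath_inst[OF A lam L])
  let ?d = "dim P"
  define V where "V = Vprev R S L lam P \<omega> t"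
  define W where "W = Wprev R S L lam P \<omega> t"
  define x where "x = Xp R S L lam P \<omega> t"
  define th where "th = thetahat R S L lam P \<omega> t"
  define g where "g = gap R S L lam P \<omega> t"
  define \<beta> where "\<beta> = beta_prev R S L lam (dim P) t"
  define l where "l = ln (real T)"
  define q where "q = x \<bullet> (minv V *\<^sub>v x)"
  have t1: "t - 1 \<le> T" using t by auto
  have gV: "goodm ?d lam V" unfolding V_def Vprev_eq by (rule Um_good[OF t1])
  have Wc: "W \<in> carrier_vec ?d" unfolding W_def Wprev_def by (rule state_snd_carrier[OF A t1])
  have thc: "th \<in> carrier_vec ?d" unfolding th_def thetahat_def using goodm_inv(3)[OF gV] Wc V_def W_def by auto
  have tc: "theta P \<in> carrier_vec ?d" using A unfolding assumption1_def by auto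
  have xc: "x \<in> carrier_vec ?d" unfolding x_def by (rule Xc[OF t])
  define u where "u = th - theta P"
  have uc: "u \<in> carrier_vec ?d" unfolding u_def using thc tc by auto
  have uVu0: "u \<bullet> (V *\<^sub>v u) \<ge> 0"
  proof -
    have "u \<bullet> u \<ge> 0" by (simp add: scalar_prod_def sum_nonneg)
    moreover have "lam * (u \<bullet> u) \<le> u \<bullet> (V *\<^sub>v u)" using gV uc unfolding goodm_def by auto
    ultimately show ?thesis using lam by (smt (verit) mult_nonneg_nonneg)
  qed
  have b0: "\<beta> \<ge> 0" unfolding \<beta>_def beta_prev_def lin_beta_def by simp
  have uVu: "u \<bullet> (V *\<^sub>v u) \<le> \<beta>"
    using B uVu0 b0 unfolding event_B_def wnorm_def V_def \<beta>_def u_def th_def by simp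
  have lpos: "l > 0" unfolding l_def using T2 by simp
  define sl where "sl = sqrt l"
  have slpos: "sl > 0" unfolding sl_def using lpos by simp
  define mx where "mx = Max ((\<lambda>b. th \<bullet> ctx P t b) ` {..<narms P t})"
  have Cx: "mx > best_val P t - g / sl" using C unfolding event_C_def mx_def th_def g_def sl_def l_def .
  have Dx: "mx - th \<bullet> x < (1 - 2 / sl) * g"
    using nD unfolding event_D_def emp_gap_def mx_def th_def g_def sl_def l_def x_def by simp
  have gdef: "g = best_val P t - theta P \<bullet> x" unfolding g_def gap_def x_def by simp
  have "(1 - 2 / sl) * g = g - 2 * (g / sl)" by (simp add: algebra_simps)
  then have key: "th \<bullet> x - theta P \<bullet> x > g / sl" using Cx Dx gdef by linarith
  have ux: "u \<bullet> x = th \<bullet> x - theta P \<bullet> x" unfolding u_def by (rule minus_scalar_prod_distrib[OF thc tc xc])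
  have g0: "g \<ge> 0" unfolding g_def by (rule gap_bounds(1)[OF A t])
  have "(g / sl)\<^sup>2 \<le> (u \<bullet> x)\<^sup>2"
    using key ux g0 slpos by (intro power_mono) auto
  also have "\<dots> \<le> (u \<bullet> (V *\<^sub>v u)) * q" unfolding q_def by (rule goodm_cs[OF gV uc xc])
  also have "\<dots> \<le> \<beta> * q"
    using uVu goodm_qnonneg[OF gV xc] unfolding q_def by (intro mult_right_mono) auto
  finally have "g\<^sup>2 / l \<le> \<beta> * q" unfolding sl_def using lpos by (simp add: power_divide)
  then have "g\<^sup>2 \<le> \<beta> * q * l" using lpos by (simp add: divide_le_eq)
  then show ?thesis unfolding g_def \<beta>_def l_def q_def x_def V_def by (simp add: mult_ac)
qed

lemma beta_mono:
  assumes t: "1 \<le> t" "t \<le> T" and R: "R \<ge> 0" and S: "S \<ge> 0" and lam: "lam > 0"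
  shows "beta_prev R S L lam d t \<le> beta_T R S L lam d T"
proof -
  have a1: "(1 + real (t - 1) * L\<^sup>2 / lam) / (1 / (real t)\<^sup>2) = (1 + real (t - 1) * L\<^sup>2 / lam) * (real t)\<^sup>2"
    by simp
  have a2: "(1 + real T * L\<^sup>2 / lam) / (1 / (real T)\<^sup>2) = (1 + real T * L\<^sup>2 / lam) * (real T)\<^sup>2" by simp
  have f1: "1 \<le> 1 + real (t - 1) * L\<^sup>2 / lam" using lam by simp
  have f2: "1 + real (t - 1) * L\<^sup>2 / lam \<le> 1 + real T * L\<^sup>2 / lam"
    using t lam by (intro add_left_mono divide_right_mono mult_right_mono) auto
  have f3: "1 \<le> (real t)\<^sup>2" using t by simp
  have f4: "(real t)\<^sup>2 \<le> (real T)\<^sup>2" using t by simp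
  have p1: "1 \<le> (1 + real (t - 1) * L\<^sup>2 / lam) * (real t)\<^sup>2" using f1 f3 by (metis mult_mono' mult_1 zero_le_one)
  have p2: "(1 + real (t - 1) * L\<^sup>2 / lam) * (real t)\<^sup>2 \<le> (1 + real T * L\<^sup>2 / lam) * (real T)\<^sup>2"
    using f1 f2 f3 f4 by (intro mult_mono) auto
  have l: "ln ((1 + real (t - 1) * L\<^sup>2 / lam) * (real t)\<^sup>2) \<le> ln ((1 + real T * L\<^sup>2 / lam) * (real T)\<^sup>2)"
    using p1 p2 by simp
  have l0: "0 \<le> ln ((1 + real (t - 1) * L\<^sup>2 / lam) * (real t)\<^sup>2)" using p1 by simp
  have "sqrt (real d * ln ((1 + real (t - 1) * L\<^sup>2 / lam) * (real t)\<^sup>2)) \<le> sqrt (real d * ln ((1 + real T * L\<^sup>2 / lam) * (real T)\<^sup>2))"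
    using l by (intro real_sqrt_le_mono mult_left_mono) auto
  then have "R * sqrt (real d * ln ((1 + real (t - 1) * L\<^sup>2 / lam) * (real t)\<^sup>2)) + sqrt lam * S \<le>
      R * sqrt (real d * ln ((1 + real T * L\<^sup>2 / lam) * (real T)\<^sup>2)) + sqrt lam * S"
    using R by (simp add: mult_left_mono)
  moreover have "0 \<le> R * sqrt (real d * ln ((1 + real (t - 1) * L\<^sup>2 / lam) * (real t)\<^sup>2)) + sqrt lam * S"
    using R S lam l0 by simp
  ultimately show ?thesis unfolding beta_prev_def beta_T_def lin_beta_def a1 a2
    by (intro power_mono) auto
qed


section \<open>Real analysis\<close>

lemma ln_lower: assumes "(q::real) \<ge> 0" shows "q / (1 + q) \<le> ln (1 + q)"
proof -
  have "ln (1 / (1 + q)) \<le> 1 / (1 + q) - 1" using assms by (intro ln_le_minus_one) simp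
  moreover have "ln (1 / (1 + q)) = - ln (1 + q)" using assms by (simp add: ln_div)
  moreover have "1 / (1 + q) - 1 = - (q / (1 + q))" using assms by (simp add: field_simps)
  ultimately show ?thesis by simp
qed

lemma ln_mult6: assumes "(y::real) \<ge> 0" shows "ln (1 + 6 * y) \<le> 6 * ln (1 + y)"
proof -
  have "1 + real 6 * y \<le> (1 + y) ^ 6" by (rule Bernoulli_inequality) (use assms in simp)
  then have "ln (1 + 6 * y) \<le> ln ((1 + y) ^ 6)" using assms by simp
  also have "\<dots> = 6 * ln (1 + y)" by (simp add: ln_realpow)
  finally show ?thesis .
qed

lemma selfbound:
  fixes W k m :: real
  assumes W: "W \<ge> 0" and k: "k > 0" and m: "m > 0" and h: "W \<le> k * ln (1 + W / m)"
  shows "W \<le> 2 * k * ln (1 + 2 * k / m)"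
proof -
  have p1: "1 + W / m > 0" using W m by (simp add: add_pos_nonneg)
  have p2: "1 + 2 * k / m > 0" using k m by (simp add: add_pos_pos)
  have "ln (1 + W / m) - ln (1 + 2 * k / m) = ln ((1 + W / m) / (1 + 2 * k / m))"
    using p1 p2 by (simp add: ln_divide_pos)
  also have "\<dots> \<le> (1 + W / m) / (1 + 2 * k / m) - 1" using p1 p2 by (intro ln_le_minus_one) simp
  also have "(1 + W / m) / (1 + 2 * k / m) - 1 = (W - 2 * k) / (m + 2 * k)"
  proof -
    have e1: "1 + W / m = (m + W) / m" and e2: "1 + 2 * k / m = (m + 2 * k) / m" using m by (simp_all add: field_simps)
    have "(1 + W / m) / (1 + 2 * k / m) = (m + W) / (m + 2 * k)" unfolding e1 e2 using m by simp
    also have "\<dots> - 1 = (W - 2 * k) / (m + 2 * k)"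
    proof -
      have "m + 2 * k > 0" using m k by simp
      then show ?thesis by (simp add: field_simps)
    qed
    finally show ?thesis .
  qed
  also have "\<dots> \<le> W / (m + 2 * k)" using m k by (intro divide_right_mono) auto
  finally have "ln (1 + W / m) \<le> ln (1 + 2 * k / m) + W / (m + 2 * k)" by simp
  then have "k * ln (1 + W / m) \<le> k * ln (1 + 2 * k / m) + k * (W / (m + 2 * k))"
    using k by (metis distrib_left mult_left_mono less_imp_le)
  also have "k * (W / (m + 2 * k)) \<le> W / 2"
  proof -
    have "k * W * 2 \<le> W * (m + 2 * k)" using W m by (simp add: algebra_simps)
    then show ?thesis using m k by (simp add: field_simps)
  qed
  finally have "W \<le> k * ln (1 + 2 * k / m) + W / 2" using h by simp
  then show ?thesis by simp
qed

lemma sum_bound: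
  fixes g q q' :: "nat \<Rightarrow> real" and E :: "nat set" and b B0 \<Gamma> :: real and d T :: nat
  assumes E: "E \<subseteq> {1..T}" and G: "0 < \<Gamma>" "\<Gamma> < 1" and B0: "B0 \<ge> 1/2" and b: "b \<ge> 0" and d: "d \<ge> 1"
    and g01: "\<And>t. t \<in> E \<Longrightarrow> 0 \<le> g t \<and> g t \<le> 1"
    and gq: "\<And>t. t \<in> E \<Longrightarrow> (g t)\<^sup>2 \<le> B0 * q t"
    and q0: "\<And>t. t \<in> E \<Longrightarrow> 0 \<le> q t"
    and qq: "\<And>t. t \<in> E \<Longrightarrow> q t \<le> q' t"
    and pot: "(\<Sum>t\<in>{t\<in>E. g t > \<Gamma>}. ln (1 + q' t)) \<le> d * ln (1 + card {t\<in>E. g t > \<Gamma>} * b / d)"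
  shows "(\<Sum>t\<in>E. g t) \<le> T * \<Gamma> + 36 * (d * B0 / \<Gamma>) * ln (1 + b * B0 / \<Gamma>\<^sup>2)"
proof -
  define Ss where "Ss = {t\<in>E. g t > \<Gamma>}"
  define N where "N = card Ss"
  define W where "W = (\<Sum>t\<in>Ss. g t)"
  define M where "M = 1 + B0 / \<Gamma>"
  have finE: "finite E" using E finite_subset by blast
  have SsE: "Ss \<subseteq> E" unfolding Ss_def by auto
  have finS: "finite Ss" using finE SsE finite_subset by blast
  have split: "(\<Sum>t\<in>E. g t) = (\<Sum>t\<in>E - Ss. g t) + W"
    unfolding W_def using sum.subset_diff[OF SsE finE] by simp
  have "(\<Sum>t\<in>E - Ss. g t) \<le> (\<Sum>t\<in>E - Ss. \<Gamma>)" by (rule sum_mono) (auto simp: Ss_def)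
  also have "\<dots> = card (E - Ss) * \<Gamma>" by simp
  also have "\<dots> \<le> T * \<Gamma>"
  proof -
    have "card (E - Ss) \<le> card {1..T}" using E by (intro card_mono) auto
    then show ?thesis using G by (intro mult_right_mono) auto
  qed
  finally have part1: "(\<Sum>t\<in>E - Ss. g t) \<le> T * \<Gamma>" .
  have Mpos: "M > 0" unfolding M_def using B0 G by (simp add: add_pos_nonneg)
  have each: "g t \<le> M * ln (1 + q' t)" if t: "t \<in> Ss" for t
  proof -
    have tE: "t \<in> E" using t SsE by auto
    have gt: "g t > \<Gamma>" using t Ss_def by auto
    have qt: "q t \<ge> 0" using q0[OF tE] .
    have "g t * \<Gamma> \<le> g t * g t" using gt G by (intro mult_left_mono) auto
    also have "\<dots> \<le> B0 * q t" using gq[OF tE] by (simp add: power2_eq_square)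
    finally have "g t \<le> B0 * q t / \<Gamma>" using G by (simp add: field_simps)
    moreover have "g t * q t \<le> q t" using g01[OF tE] qt by (simp add: mult_left_le_one_le)
    ultimately have "g t + g t * q t \<le> B0 * q t / \<Gamma> + q t" by simp
    then have "g t * (1 + q t) \<le> M * q t" unfolding M_def by (simp add: algebra_simps)
    then have "g t \<le> M * (q t / (1 + q t))" using qt by (simp add: field_simps)
    also have "\<dots> \<le> M * ln (1 + q t)" using Mpos ln_lower[OF qt] by (intro mult_left_mono) auto
    also have "\<dots> \<le> M * ln (1 + q' t)" using Mpos qt qq[OF tE] by (intro mult_left_mono) auto
    finally show ?thesis .
  qed
  have "W \<le> (\<Sum>t\<in>Ss. M * ln (1 + q' t))" unfolding W_def by (rule sum_mono) (rule each)
  also have "\<dots> = M * (\<Sum>t\<in>Ss. ln (1 + q' t))" by (simp add: sum_distrib_left)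
  also have "\<dots> \<le> M * (d * ln (1 + N * b / d))" using pot Mpos unfolding Ss_def N_def by (intro mult_left_mono) auto
  finally have WM: "W \<le> M * d * ln (1 + N * b / d)" by simp
  have NW: "N * \<Gamma> \<le> W"
  proof -
    have "(\<Sum>t\<in>Ss. \<Gamma>) \<le> W" unfolding W_def by (rule sum_mono) (auto simp: Ss_def)
    then show ?thesis unfolding N_def by simp
  qed
  have W0: "W \<ge> 0" unfolding W_def using g01 SsE by (intro sum_nonneg) auto
  have B0G: "B0 / \<Gamma> > 0" using B0 G by simp
  have Mle: "M \<le> 3 * B0 / \<Gamma>"
  proof -
    have "1 \<le> 2 * B0 / \<Gamma>" using B0 G by (simp add: field_simps)
    then show ?thesis unfolding M_def by simp
  qed
  have target0: "0 \<le> 36 * (d * B0 / \<Gamma>) * ln (1 + b * B0 / \<Gamma>\<^sup>2)"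
    using B0 G b d by (intro mult_nonneg_nonneg) auto
  have Wb: "W \<le> 36 * (d * B0 / \<Gamma>) * ln (1 + b * B0 / \<Gamma>\<^sup>2)"
  proof (cases "b = 0")
    case True
    then show ?thesis using WM target0 by simp
  next
    case False
    then have bpos: "b > 0" using b by simp
    define k where "k = M * d"
    define m where "m = d * \<Gamma> / b"
    have kpos: "k > 0" unfolding k_def using Mpos d by simp
    have mpos: "m > 0" unfolding m_def using G d bpos by simp
    have "N * b / d \<le> W / m"
    proof -
      have "N * b / d = (N * \<Gamma>) * b / (d * \<Gamma>)" using G by simp
      also have "\<dots> \<le> W * b / (d * \<Gamma>)" using NW bpos G d by (intro divide_right_mono mult_right_mono) auto
      also have "\<dots> = W / m" unfolding m_def by simp
      finally show ?thesis .
    qed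
    then have "ln (1 + N * b / d) \<le> ln (1 + W / m)"
      using bpos d mpos W0 by (subst ln_le_cancel_iff) (auto intro: add_pos_nonneg)
    then have "W \<le> k * ln (1 + W / m)" using WM kpos unfolding k_def
      by (smt (verit, ccfv_SIG) mult_left_mono)
    then have W2: "W \<le> 2 * k * ln (1 + 2 * k / m)" by (rule selfbound[OF W0 kpos mpos])
    have "2 * k / m = 6 * (b * B0 / \<Gamma>\<^sup>2) * (M / (3 * B0 / \<Gamma>))"
      unfolding k_def m_def using G d B0 by (simp add: field_simps power2_eq_square)
    also have "\<dots> \<le> 6 * (b * B0 / \<Gamma>\<^sup>2)"
    proof -
      have aux: "\<And>x c :: real. c > 0 \<Longrightarrow> x \<le> c \<Longrightarrow> x / c \<le> 1" by (simp add: divide_le_eq)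
      have "M / (3 * B0 / \<Gamma>) \<le> 1" by (rule aux[OF _ Mle]) (use B0G in simp)
      moreover have "0 \<le> 6 * (b * B0 / \<Gamma>\<^sup>2)" using b B0 by simp
      ultimately show ?thesis by (rule mult_left_le)
    qed
    finally have km: "2 * k / m \<le> 6 * (b * B0 / \<Gamma>\<^sup>2)" .
    have "ln (1 + 2 * k / m) \<le> ln (1 + 6 * (b * B0 / \<Gamma>\<^sup>2))"
    proof -
      have "0 < 1 + 2 * k / m" using kpos mpos by (simp add: add_pos_pos)
      moreover have "0 \<le> 6 * (b * B0 / \<Gamma>\<^sup>2)" using b B0 by simp
      ultimately show ?thesis using km by simp
    qed
    also have "\<dots> \<le> 6 * ln (1 + b * B0 / \<Gamma>\<^sup>2)" by (rule ln_mult6) (use b B0 in simp)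
    finally have lnb: "ln (1 + 2 * k / m) \<le> 6 * ln (1 + b * B0 / \<Gamma>\<^sup>2)" .
    have ln0: "ln (1 + 2 * k / m) \<ge> 0" using kpos mpos by simp
    have "W \<le> 2 * k * ln (1 + 2 * k / m)" by (rule W2)
    also have "\<dots> \<le> 2 * (3 * B0 / \<Gamma> * d) * (6 * ln (1 + b * B0 / \<Gamma>\<^sup>2))"
    proof (rule mult_mono)
      have "M * d \<le> 3 * B0 / \<Gamma> * d" using Mle by (rule mult_right_mono) simp
      then show "2 * k \<le> 2 * (3 * B0 / \<Gamma> * d)" unfolding k_def by simp
      show "ln (1 + 2 * k / m) \<le> 6 * ln (1 + b * B0 / \<Gamma>\<^sup>2)" by (rule lnb)
      show "0 \<le> 2 * (3 * B0 / \<Gamma> * d)" using B0 G by simp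
      show "0 \<le> ln (1 + 2 * k / m)" by (rule ln0)
    qed
    also have "\<dots> = 36 * (d * B0 / \<Gamma>) * ln (1 + b * B0 / \<Gamma>\<^sup>2)" by simp
    finally show ?thesis .
  qed
  show ?thesis using split part1 Wb by simp
qed


lemma beta_T_ge1:
  assumes R: "R \<ge> 0" and lam: "lam > 0" and S1: "sqrt lam * S \<ge> 1" and T: "T \<ge> 1"
  shows "beta_T R S L lam d T \<ge> 1"
proof -
  have "(1 + real T * L\<^sup>2 / lam) / (1 / (real T)\<^sup>2) \<ge> 1"
  proof -
    have "1 + real T * L\<^sup>2 / lam \<ge> 1" using lam by simp
    moreover have "(real T)\<^sup>2 \<ge> 1" using T by simp
    ultimately show ?thesis by (simp add: one_le_mult_iff mult_mono' order_trans[OF _ mult_mono] mult_ge1_I)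
  qed
  then have "0 \<le> R * sqrt (real d * ln ((1 + real T * L\<^sup>2 / lam) / (1 / (real T)\<^sup>2)))" using R by simp
  then have "1 \<le> R * sqrt (real d * ln ((1 + real T * L\<^sup>2 / lam) / (1 / (real T)\<^sup>2))) + sqrt lam * S" using S1 by simp
  then show ?thesis unfolding beta_T_def lin_beta_def by (simp add: one_le_power)
qed

lemma pathwise:
  fixes R S L lam \<Gamma> :: real and P :: "('z) lb_instance_scheme"
  assumes lam: "lam > 0" and R: "R \<ge> 0" and S: "S \<ge> 0" and L: "L \<ge> 0" and S1: "sqrt lam * S \<ge> 1"
    and d: "dim P \<ge> 1" and T2: "T \<ge> 2" and A: "assumption1 S L P T" and G: "0 < \<Gamma>" "\<Gamma> < 1"
  shows "(\<Sum>t\<in>{1..T}. gap R S L lam P \<omega> t *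
        (if event_B R S L lam P \<omega> t \<and> event_C R S L lam P T \<omega> t \<and> \<not> event_D R S L lam P T \<omega> t
         then 1 else 0))
     \<le> T * \<Gamma> + 36 * (real (dim P) * beta_T R S L lam (dim P) T * ln (real T) / \<Gamma>)
          * ln (1 + L\<^sup>2 * beta_T R S L lam (dim P) T * ln (real T) / (lam * \<Gamma>\<^sup>2))"
proof -
  interpret vpath "dim P" lam "Xp R S L lam P \<omega>" T L by (rule vpath_inst[OF A lam L])
  let ?d = "dim P"
  let ?X = "Xp R S L lam P \<omega>"
  let ?g = "gap R S L lam P \<omega>"
  define \<beta> where "\<beta> = beta_T R S L lam (dim P) T"
  define l where "l = ln (real T)"
  define E where "E = {t\<in>{1..T}. event_B R S L lam P \<omega> t \<and> event_C R S L lam P T \<omega> t \<and> \<not> event_D R S L lam P T \<omega> t}"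
  define Ss where "Ss = {t\<in>E. ?g t > \<Gamma>}"
  define q where "q = (\<lambda>t. ?X t \<bullet> (minv (Vprev R S L lam P \<omega> t) *\<^sub>v ?X t))"
  define q' where "q' = (\<lambda>t. ?X t \<bullet> (minv (Um ?d lam ?X Ss (t - 1)) *\<^sub>v ?X t))"
  have lpos: "l > 0" unfolding l_def using T2 by simp
  have l2: "l \<ge> 1/2"
  proof -
    have "ln (2::real) \<le> l" unfolding l_def using T2 by simp
    then show ?thesis using ln2_ge_two_thirds by simp
  qed
  have b1: "\<beta> \<ge> 1" unfolding \<beta>_def by (rule beta_T_ge1[OF R lam S1]) (use T2 in simp)
  have LHS: "(\<Sum>t\<in>{1..T}. ?g t * (if event_B R S L lam P \<omega> t \<and> event_C R S L lam P T \<omega> t \<and> \<not> event_D R S L lam P T \<omega> t then 1 else 0))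
      = (\<Sum>t\<in>E. ?g t)"
  proof -
    have "(\<Sum>t\<in>{1..T}. ?g t * (if event_B R S L lam P \<omega> t \<and> event_C R S L lam P T \<omega> t \<and> \<not> event_D R S L lam P T \<omega> t then 1 else 0))
      = (\<Sum>t\<in>{1..T}. if event_B R S L lam P \<omega> t \<and> event_C R S L lam P T \<omega> t \<and> \<not> event_D R S L lam P T \<omega> t then ?g t else 0)"
      by (intro sum.cong) auto
    also have "\<dots> = (\<Sum>t\<in>E. ?g t)" unfolding E_def by (rule sum.inter_filter[symmetric]) simp
    finally show ?thesis .
  qed
  have EsubT: "E \<subseteq> {1..T}" unfolding E_def by auto
  have main: "(\<Sum>t\<in>E. ?g t) \<le> T * \<Gamma> + 36 * (?d * (\<beta> * l) / \<Gamma>) * ln (1 + (L\<^sup>2 / lam) * (\<beta> * l) / \<Gamma>\<^sup>2)"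
  proof (rule sum_bound[where q = q and q' = q'])
    show "E \<subseteq> {1..T}" by (rule EsubT)
    show "0 < \<Gamma>" "\<Gamma> < 1" by (rule G(1), rule G(2))
    have "1 * (1/2) \<le> \<beta> * l" using b1 l2 by (intro mult_mono) auto
    then show "1/2 \<le> \<beta> * l" by simp
    show "0 \<le> L\<^sup>2 / lam" using lam by simp
    show "1 \<le> ?d" by (rule d)
    fix t assume tE: "t \<in> E"
    then have t: "t \<in> {1..T}" using EsubT by auto
    have t1: "t - 1 \<le> T" using t by auto
    show "0 \<le> ?g t \<and> ?g t \<le> 1" using gap_bounds[OF A t] by simp
    have gV: "goodm ?d lam (Vprev R S L lam P \<omega> t)" unfolding Vprev_eq by (rule Um_good[OF t1])
    show q0: "0 \<le> q t" unfolding q_def by (rule goodm_qnonneg[OF gV Xc[OF t]])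
    have "(?g t)\<^sup>2 \<le> beta_prev R S L lam ?d t * l * q t"
      unfolding q_def l_def using tE round_bound[OF A t lam L T2] unfolding E_def by auto
    also have "\<dots> \<le> \<beta> * l * q t"
      using beta_mono[of t T R S lam L ?d] t R S lam lpos q0 unfolding \<beta>_def
      by (intro mult_right_mono) auto
    finally show "(?g t)\<^sup>2 \<le> \<beta> * l * q t" .
    show "q t \<le> q' t" unfolding q_def q'_def Vprev_eq
    proof (rule goodm_loewner[OF Um_good[OF t1] Um_good[OF t1] Xc[OF t]])
      fix u :: "real Matrix.vec" assume u: "u \<in> carrier_vec ?d"
      have "(\<Sum>s\<in>{1..t - 1} \<inter> Ss. (?X s \<bullet> u) * (?X s \<bullet> u)) \<le> (\<Sum>s\<in>{1..t - 1} \<inter> UNIV. (?X s \<bullet> u) * (?X s \<bullet> u))"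
        by (rule sum_mono2) auto
      then show "u \<bullet> (Um ?d lam ?X Ss (t - 1) *\<^sub>v u) \<le> u \<bullet> (Um ?d lam ?X UNIV (t - 1) *\<^sub>v u)"
        unfolding Um_quad[OF t1 u u] by simp
    qed
  next
    have SsT: "{1..T} \<inter> Ss = Ss" using EsubT unfolding Ss_def by auto
    have "(\<Sum>s\<in>{1..T} \<inter> Ss. ln (1 + q' s)) \<le> ?d * ln (1 + card ({1..T} \<inter> Ss) * L\<^sup>2 / (?d * lam))"
      unfolding q'_def by (rule potential[OF d])
    then show "(\<Sum>t\<in>{t\<in>E. ?g t > \<Gamma>}. ln (1 + q' t)) \<le> ?d * ln (1 + card {t\<in>E. ?g t > \<Gamma>} * (L\<^sup>2 / lam) / ?d)"
      unfolding SsT Ss_def[symmetric] by (simp add: mult.commute)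
  qed
  have e1: "?d * (\<beta> * l) / \<Gamma> = real (dim P) * beta_T R S L lam (dim P) T * ln (real T) / \<Gamma>"
    unfolding \<beta>_def l_def by simp
  have e2: "(L\<^sup>2 / lam) * (\<beta> * l) / \<Gamma>\<^sup>2 = L\<^sup>2 * beta_T R S L lam (dim P) T * ln (real T) / (lam * \<Gamma>\<^sup>2)"
    unfolding \<beta>_def l_def by simp
  show ?thesis unfolding LHS using main unfolding e1 e2 .
qed


lemma integral_le_const:
  fixes f :: "'a \<Rightarrow> real"
  assumes P: "prob_space M" and fK: "\<And>x. f x \<le> K" and K: "0 \<le> K"
  shows "integral\<^sup>L M f \<le> K"
proof (cases "integrable M f")
  case True
  interpret prob_space M by (rule P)
  have "integral\<^sup>L M f \<le> integral\<^sup>L M (\<lambda>_. K)"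
    by (rule integral_mono[OF True]) (auto simp: fK)
  also have "\<dots> = K" by (simp add: prob_space)
  finally show ?thesis .
next
  case False
  then show ?thesis using K by (simp add: not_integrable_integral_eq)
qed

lemma part1:
  fixes R S L lam :: real
  assumes "lam > 0" and "R \<ge> 0" and "S \<ge> 0" and "L \<ge> 0" and "sqrt lam * S \<ge> 1"
    and d: "dim P \<ge> 1" and T2: "T \<ge> 2" and A: "assumption1 S L P T" and sg: "subgauss_noise R T M"
    and G: "0 < \<Gamma>" "\<Gamma> < 1"
  shows "F2 R S L lam P T M \<le> 2 * real T * \<Gamma>
                 + 36 * (real (dim P) * beta_T R S L lam (dim P) T * ln (real T) / \<Gamma>)
                     * ln (1 + L\<^sup>2 * beta_T R S L lam (dim P) T * ln (real T) / (lam * \<Gamma>\<^sup>2))"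
proof -
  let ?K = "2 * real T * \<Gamma> + 36 * (real (dim P) * beta_T R S L lam (dim P) T * ln (real T) / \<Gamma>)
                     * ln (1 + L\<^sup>2 * beta_T R S L lam (dim P) T * ln (real T) / (lam * \<Gamma>\<^sup>2))"
  have b0: "beta_T R S L lam (dim P) T \<ge> 0" unfolding beta_T_def lin_beta_def by simp
  have l0: "ln (real T) > 0" using T2 by simp
  have t2: "0 \<le> 36 * (real (dim P) * beta_T R S L lam (dim P) T * ln (real T) / \<Gamma>)
                     * ln (1 + L\<^sup>2 * beta_T R S L lam (dim P) T * ln (real T) / (lam * \<Gamma>\<^sup>2))"
    using b0 l0 G \<open>lam > 0\<close> by (intro mult_nonneg_nonneg) auto
  have K0: "0 \<le> ?K" using t2 G by simp
  have P: "prob_space M" using sg unfolding subgauss_noise_def by simp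
  show ?thesis unfolding F2_def
  proof (rule integral_le_const[OF P _ K0])
    fix \<omega>
    have "(\<Sum>t\<in>{1..T}. gap R S L lam P \<omega> t *
        (if event_B R S L lam P \<omega> t \<and> event_C R S L lam P T \<omega> t \<and> \<not> event_D R S L lam P T \<omega> t
         then 1 else 0))
     \<le> T * \<Gamma> + 36 * (real (dim P) * beta_T R S L lam (dim P) T * ln (real T) / \<Gamma>)
          * ln (1 + L\<^sup>2 * beta_T R S L lam (dim P) T * ln (real T) / (lam * \<Gamma>\<^sup>2))"
      by (rule pathwise) (use assms in auto)
    also have "\<dots> \<le> ?K" using G by simp
    finally show "(\<Sum>t\<in>{1..T}. gap R S L lam P \<omega> t *
        (if event_B R S L lam P \<omega> t \<and> event_C R S L lam P T \<omega> t \<and> \<not> event_D R S L lam P T \<omega> t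
         then 1 else 0)) \<le> ?K" .
  qed
qed


lemma part2_real:
  fixes R S L lam :: real and d T :: nat
  assumes lam: "lam > 0" and R: "R \<ge> 0" and S: "S \<ge> 0" and L: "L \<ge> 0" and d: "d \<ge> 1" and T2: "T \<ge> 2"
  defines "b \<equiv> L\<^sup>2 / lam"
  defines "c1 \<equiv> 3/2 * ln (1 + b) + 3"
  defines "c4 \<equiv> 2 * R\<^sup>2 * c1 + 3 * lam * S\<^sup>2"
  defines "c5 \<equiv> 3/2 * b * c4"
  defines "c6 \<equiv> 3/2 * ln (1 + c5) + 1"
  shows "2 * real T * (real d * ln (real T) powr (3/2) / sqrt (real T))
     + 36 * (real d * beta_T R S L lam d T * ln (real T) / (real d * ln (real T) powr (3/2) / sqrt (real T)))
       * ln (1 + L\<^sup>2 * beta_T R S L lam d T * ln (real T) / (lam * (real d * ln (real T) powr (3/2) / sqrt (real T))\<^sup>2))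
     \<le> (2 + 36 * c4 * c6) * real d * sqrt (real T) * ln (real T) powr (3/2)"
proof -
  define l where "l = ln (real T)"
  define sl where "sl = sqrt l"
  define sT where "sT = sqrt (real T)"
  define p where "p = l powr (3/2)"
  define \<beta> where "\<beta> = beta_T R S L lam d T"
  have l23: "l \<ge> 2/3"
  proof -
    have "ln (2::real) \<le> l" unfolding l_def using T2 by simp
    then show ?thesis using ln2_ge_two_thirds by simp
  qed
  have lpos: "l > 0" using l23 by simp
  have slpos: "sl > 0" unfolding sl_def using lpos by simp
  have slsq: "sl * sl = l" unfolding sl_def using lpos by simp
  have p_eq: "p = l * sl"
  proof -
    have "p = l powr (1 + 1/2)" unfolding p_def by simp
    also have "\<dots> = l powr 1 * l powr (1/2)" by (rule powr_add)
    also have "\<dots> = l * sl" unfolding sl_def using lpos by (simp add: powr_half_sqrt)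
    finally show ?thesis .
  qed
  have sTpos: "sT > 0" unfolding sT_def using T2 by simp
  have sTsq: "sT * sT = real T" unfolding sT_def by simp
  have dpos: "real d \<ge> 1" using d by simp
  have b0: "b \<ge> 0" unfolding b_def using lam by simp
  have c1: "c1 \<ge> 0" unfolding c1_def using b0 by simp
  have c4: "c4 \<ge> 0" unfolding c4_def using c1 lam by simp
  have c5: "c5 \<ge> 0" unfolding c5_def using c4 b0 by simp
  have c6: "c6 \<ge> 0" unfolding c6_def using c5 by simp
  have dl: "real d * l \<ge> 2/3" using dpos l23 by (metis mult_mono' mult_1 order_trans zero_le_one less_eq_real_def lpos)
  define ell where "ell = ln ((1 + real T * L\<^sup>2 / lam) / (1 / (real T)\<^sup>2))"
  have Targ: "(1 + real T * L\<^sup>2 / lam) / (1 / (real T)\<^sup>2) = (1 + b * T) * (real T)\<^sup>2" unfolding b_def by simp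
  have T1: "real T \<ge> 1" using T2 by simp
  have ell0: "ell \<ge> 0"
  proof -
    have "1 \<le> (1 + b * T) * (real T)\<^sup>2" using b0 T1 by (simp add: one_le_mult_iff mult_ge1_I one_le_power)
    then show ?thesis unfolding ell_def Targ by simp
  qed
  have ell_le: "ell \<le> c1 * l"
  proof -
    have "1 + b * T \<le> (1 + b) * T" using b0 T1 by (simp add: algebra_simps)
    then have "(1 + b * T) * (real T)\<^sup>2 \<le> (1 + b) * T * (real T)\<^sup>2" by (intro mult_right_mono) auto
    then have "ell \<le> ln ((1 + b) * (real T) ^ 3)" unfolding ell_def Targ using b0 T1
      by (subst ln_le_cancel_iff) (auto simp: power2_eq_square power3_eq_cube mult.assoc intro!: mult_pos_pos add_pos_nonneg)
    also have "\<dots> = ln (1 + b) + 3 * l" unfolding l_def using b0 T1 by (simp add: ln_mult ln_realpow add_pos_nonneg)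
    also have "ln (1 + b) \<le> 3/2 * ln (1 + b) * l"
    proof -
      have "ln (1 + b) \<ge> 0" using b0 by simp
      then have "ln (1 + b) * 1 \<le> ln (1 + b) * (3/2 * l)" using l23 by (intro mult_left_mono) auto
      then show ?thesis by (simp add: mult_ac)
    qed
    finally show ?thesis unfolding c1_def by (simp add: algebra_simps)
  qed
  have beta_le: "\<beta> \<le> c4 * (real d * l)"
  proof -
    let ?a = "R * sqrt (real d * ell)" and ?c = "sqrt lam * S"
    have "\<beta> = (?a + ?c)\<^sup>2" unfolding \<beta>_def beta_T_def lin_beta_def ell_def by simp
    also have "\<dots> \<le> 2 * ?a\<^sup>2 + 2 * ?c\<^sup>2"
    proof -
      have "0 \<le> (?a - ?c)\<^sup>2" by simp
      then show ?thesis by (simp add: power2_eq_square algebra_simps)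
    qed
    also have "?a\<^sup>2 = R\<^sup>2 * (real d * ell)" using ell0 by (simp add: power_mult_distrib)
    also have "?c\<^sup>2 = lam * S\<^sup>2" using lam by (simp add: power_mult_distrib)
    also have "2 * (R\<^sup>2 * (real d * ell)) \<le> 2 * (R\<^sup>2 * (real d * (c1 * l)))"
      using ell_le by (intro mult_left_mono) auto
    also have "2 * (lam * S\<^sup>2) \<le> 3 * lam * S\<^sup>2 * (real d * l)"
    proof -
      have "lam * S\<^sup>2 \<ge> 0" using lam by simp
      then have "(lam * S\<^sup>2) * 2 \<le> (lam * S\<^sup>2) * (3 * (real d * l))" using dl by (intro mult_left_mono) auto
      then show ?thesis by (simp add: mult_ac)
    qed
    finally show ?thesis unfolding c4_def by (simp add: algebra_simps)
  qed
  have beta0: "\<beta> \<ge> 0" unfolding \<beta>_def beta_T_def lin_beta_def by simp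
  define G where "G = real d * p / sT"
  have Gpos: "G > 0" unfolding G_def p_eq using dpos lpos slpos sTpos by simp
  have first: "2 * real T * G = 2 * real d * sT * p"
    unfolding G_def using sTpos by (simp add: sTsq[symmetric] field_simps)
  have ratio: "real d * \<beta> * l / G = \<beta> * sT / sl"
    unfolding G_def p_eq using dpos lpos slpos sTpos slsq by (simp add: field_simps)
  have argeq: "L\<^sup>2 * \<beta> * l / (lam * G\<^sup>2) = b * \<beta> * real T / ((real d)\<^sup>2 * l\<^sup>2)"
  proof -
    have G2: "G\<^sup>2 = (real d)\<^sup>2 * (l * l * l) / real T"
      unfolding G_def p_eq using sTpos by (simp add: power2_eq_square sTsq[symmetric] slsq[symmetric] field_simps)
    have "L\<^sup>2 * \<beta> * l / (lam * G\<^sup>2) = L\<^sup>2 * \<beta> * l * real T / (lam * ((real d)\<^sup>2 * (l * l * l)))"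
      unfolding G2 using T1 by simp
    also have "\<dots> = b * \<beta> * real T / ((real d)\<^sup>2 * l\<^sup>2)"
      unfolding b_def using lam lpos dpos by (simp add: field_simps power2_eq_square)
    finally show ?thesis .
  qed
  have arg_le: "L\<^sup>2 * \<beta> * l / (lam * G\<^sup>2) \<le> c5 * real T"
  proof -
    have "b * \<beta> * real T / ((real d)\<^sup>2 * l\<^sup>2) \<le> b * (c4 * (real d * l)) * real T / ((real d)\<^sup>2 * l\<^sup>2)"
      using beta_le b0 T1 by (intro divide_right_mono mult_right_mono mult_left_mono) auto
    also have "\<dots> = b * c4 * real T * (1 / (real d * l))" using dpos lpos by (simp add: field_simps power2_eq_square)
    also have "\<dots> \<le> b * c4 * real T * (3/2)"
    proof (rule mult_left_mono)
      show "1 / (real d * l) \<le> 3/2" using dl by (simp add: divide_le_eq)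
      show "0 \<le> b * c4 * real T" using b0 c4 by simp
    qed
    also have "\<dots> = c5 * real T" unfolding c5_def by simp
    finally show ?thesis unfolding argeq .
  qed
  have arg0: "0 \<le> L\<^sup>2 * \<beta> * l / (lam * G\<^sup>2)" using beta0 lpos lam by simp
  have Q_le: "ln (1 + L\<^sup>2 * \<beta> * l / (lam * G\<^sup>2)) \<le> c6 * l"
  proof -
    have "ln (1 + L\<^sup>2 * \<beta> * l / (lam * G\<^sup>2)) \<le> ln ((1 + c5) * real T)"
    proof (subst ln_le_cancel_iff)
      show "0 < 1 + L\<^sup>2 * \<beta> * l / (lam * G\<^sup>2)" using arg0 by linarith
      show "0 < (1 + c5) * real T" using c5 T1 by simp
      have "1 + c5 * real T \<le> (1 + c5) * real T" using T1 by (simp add: algebra_simps)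
      then show "1 + L\<^sup>2 * \<beta> * l / (lam * G\<^sup>2) \<le> (1 + c5) * real T" using arg_le by linarith
    qed
    also have "\<dots> = ln (1 + c5) + l" unfolding l_def using c5 T1 by (simp add: ln_mult add_pos_nonneg)
    also have "ln (1 + c5) \<le> 3/2 * ln (1 + c5) * l"
    proof -
      have "ln (1 + c5) \<ge> 0" using c5 by simp
      then have "ln (1 + c5) * 1 \<le> ln (1 + c5) * (3/2 * l)" using l23 by (intro mult_left_mono) auto
      then show ?thesis by (simp add: mult_ac)
    qed
    finally show ?thesis unfolding c6_def by (simp add: algebra_simps)
  qed
  have Q0: "0 \<le> ln (1 + L\<^sup>2 * \<beta> * l / (lam * G\<^sup>2))" using arg0 by simp
  have second: "36 * (real d * \<beta> * l / G) * ln (1 + L\<^sup>2 * \<beta> * l / (lam * G\<^sup>2)) \<le> 36 * c4 * c6 * real d * sT * p"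
  proof -
    have "real d * \<beta> * l / G \<le> c4 * (real d * l) * sT / sl"
      unfolding ratio using beta_le sTpos slpos by (intro divide_right_mono mult_right_mono) auto
    then have "(real d * \<beta> * l / G) * ln (1 + L\<^sup>2 * \<beta> * l / (lam * G\<^sup>2)) \<le> (c4 * (real d * l) * sT / sl) * (c6 * l)"
      using Q_le Q0 c4 dpos lpos sTpos slpos by (intro mult_mono) auto
    also have "\<dots> = c4 * c6 * real d * sT * p" unfolding p_eq using slpos slsq
      by (simp add: field_simps)
    finally show ?thesis by simp
  qed
  have "2 * real T * G + 36 * (real d * \<beta> * l / G) * ln (1 + L\<^sup>2 * \<beta> * l / (lam * G\<^sup>2))
      \<le> (2 + 36 * c4 * c6) * real d * sT * p"
    using first second by (simp add: algebra_simps)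
  then show ?thesis unfolding G_def p_def sT_def l_def \<beta>_def .
qed


theorem lemma3:
  fixes R S L lam :: real
  assumes "lam > 0" and "R \<ge> 0" and "S \<ge> 0" and "L \<ge> 0"
    and "sqrt lam * S \<ge> 1"
  shows "(\<exists>C. \<forall>(P :: lb_instance) T M \<Gamma>.
            dim P \<ge> 1 \<and> T \<ge> 2 \<and> assumption1 S L P T \<and> subgauss_noise R T M \<and> 0 < \<Gamma> \<and> \<Gamma> < 1 \<longrightarrow>
            F2 R S L lam P T M
              \<le> 2 * real T * \<Gamma>
                 + C * (real (dim P) * beta_T R S L lam (dim P) T * ln (real T) / \<Gamma>)
                     * ln (1 + L\<^sup>2 * beta_T R S L lam (dim P) T * ln (real T) / (lam * \<Gamma>\<^sup>2)))
       \<and> (\<exists>C. \<forall>(P :: lb_instance) T M.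
            dim P \<ge> 1 \<and> T \<ge> 2 \<and> assumption1 S L P T \<and> subgauss_noise R T M \<and>
            real (dim P) * ln (real T) powr (3/2) / sqrt (real T) < 1 \<longrightarrow>
            F2 R S L lam P T M \<le> C * real (dim P) * sqrt (real T) * ln (real T) powr (3/2))"
proof (intro conjI)
  show "\<exists>C. \<forall>(P :: lb_instance) T M \<Gamma>.
            dim P \<ge> 1 \<and> T \<ge> 2 \<and> assumption1 S L P T \<and> subgauss_noise R T M \<and> 0 < \<Gamma> \<and> \<Gamma> < 1 \<longrightarrow>
            F2 R S L lam P T M
              \<le> 2 * real T * \<Gamma>
                 + C * (real (dim P) * beta_T R S L lam (dim P) T * ln (real T) / \<Gamma>)
                     * ln (1 + L\<^sup>2 * beta_T R S L lam (dim P) T * ln (real T) / (lam * \<Gamma>\<^sup>2))"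
    by (rule exI[of _ 36]) (use part1[OF assms] in blast)
next
  define b where "b = L\<^sup>2 / lam"
  define c1 where "c1 = 3/2 * ln (1 + b) + 3"
  define c4 where "c4 = 2 * R\<^sup>2 * c1 + 3 * lam * S\<^sup>2"
  define c5 where "c5 = 3/2 * b * c4"
  define c6 where "c6 = 3/2 * ln (1 + c5) + 1"
  show "\<exists>C. \<forall>(P :: lb_instance) T M.
            dim P \<ge> 1 \<and> T \<ge> 2 \<and> assumption1 S L P T \<and> subgauss_noise R T M \<and>
            real (dim P) * ln (real T) powr (3/2) / sqrt (real T) < 1 \<longrightarrow>
            F2 R S L lam P T M \<le> C * real (dim P) * sqrt (real T) * ln (real T) powr (3/2)"
  proof (rule exI[of _ "2 + 36 * c4 * c6"], intro allI impI)
    fix P :: lb_instance and T :: nat and M :: "(nat \<Rightarrow> real) measure"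
    assume H: "dim P \<ge> 1 \<and> T \<ge> 2 \<and> assumption1 S L P T \<and> subgauss_noise R T M \<and>
            real (dim P) * ln (real T) powr (3/2) / sqrt (real T) < 1"
    define G where "G = real (dim P) * ln (real T) powr (3/2) / sqrt (real T)"
    have Gpos: "0 < G" unfolding G_def using H by simp
    have G1: "G < 1" unfolding G_def using H by simp
    have "F2 R S L lam P T M \<le> 2 * real T * G
                 + 36 * (real (dim P) * beta_T R S L lam (dim P) T * ln (real T) / G)
                     * ln (1 + L\<^sup>2 * beta_T R S L lam (dim P) T * ln (real T) / (lam * G\<^sup>2))"
      by (rule part1[OF assms]) (use H Gpos G1 in auto)
    also have "\<dots> \<le> (2 + 36 * c4 * c6) * real (dim P) * sqrt (real T) * ln (real T) powr (3/2)"
      unfolding G_def c6_def c5_def c4_def c1_def b_def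
      by (rule part2_real) (use assms H in auto)
    finally show "F2 R S L lam P T M \<le> (2 + 36 * c4 * c6) * real (dim P) * sqrt (real T) * ln (real T) powr (3/2)" .
  qed
qed

end
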